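(* Let $L\ge2$ be an even integer, $A>0$, and let $\varphi$ be the principal eigenfunction of $-\Delta\varphi+Av\cdot\nabla\varphi=\lambda\varphi$ in $D$, $\varphi=0$ on $\partial D$, $\varphi>0$ in $D$. Let $Q_i$ be any cell. For any $\delta_0\in(0,\frac{1}{2\pi})$ there exists a level set $\Gamma_i\subset Q_i$ of $H$ with $|H(\Gamma_i)|\in(\delta_0,2\delta_0)$ such that $$\sup_{x_1,x_2\in\Gamma_i}|\varphi(x_1)-\varphi(x_2)|^2\le C\frac{1}{\delta_0}\log\Bigl(\frac1{\delta_0}\Bigr)\int_{Q_i}|v\cdot\nabla\varphi|^2\,dx,$$ for a constant $C$ independent of $A$, $L$ and $\delta_0$.
   Context: $H(x_1,x_2)=\frac{1}{\pi}\sin(\pi x_1)\sin(\pi x_2)$, $v=(-\partial_{x_2}H,\partial_{x_1}H)$, $D=[-L/2,L/2]^2$. The cells are the unit squares $[k,k+1]\times[m,m+1]\subset D$ ($k,m$ integers), on whose boundaries $H=0$ and in whose interiors $H$ has a fixed sign. A level set of $H$ in a cell $Q_i$ is a set $\{x\in Q_i: H(x)=h\}$ with $h\neq0$; $H(\Gamma_i)$ denotes this value $h$. *)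

theory Defs
  imports "HOL-Analysis.Analysis"
begin

definition H :: "real \<times> real \<Rightarrow> real" where
  "H x = (1 / pi) * sin (pi * fst x) * sin (pi * snd x)"

definition d1 :: "(real \<times> real \<Rightarrow> real) \<Rightarrow> real \<times> real \<Rightarrow> real" where
  "d1 f x = deriv (\<lambda>t. f (t, snd x)) (fst x)"

definition d2 :: "(real \<times> real \<Rightarrow> real) \<Rightarrow> real \<times> real \<Rightarrow> real" where
  "d2 f x = deriv (\<lambda>t. f (fst x, t)) (snd x)"

definition grad :: "(real \<times> real \<Rightarrow> real) \<Rightarrow> real \<times> real \<Rightarrow> real \<times> real" where
  "grad f x = (d1 f x, d2 f x)"

definition lap :: "(real \<times> real \<Rightarrow> real) \<Rightarrow> real \<times> real \<Rightarrow> real" where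
  "lap f x = d1 (d1 f) x + d2 (d2 f) x"

definition v :: "real \<times> real \<Rightarrow> real \<times> real" where
  "v x = (- d2 H x, d1 H x)"

definition D :: "real \<Rightarrow> (real \<times> real) set" where
  "D L = {-L/2..L/2} \<times> {-L/2..L/2}"

definition is_cell :: "real \<Rightarrow> (real \<times> real) set \<Rightarrow> bool" where
  "is_cell L Q \<longleftrightarrow> (\<exists>k m :: int. Q = {real_of_int k..real_of_int k + 1} \<times> {real_of_int m..real_of_int m + 1}
                        \<and> Q \<subseteq> D L)"

definition C1_on :: "(real \<times> real) set \<Rightarrow> (real \<times> real \<Rightarrow> real) \<Rightarrow> bool" where
  "C1_on S f \<longleftrightarrow> (\<forall>x\<in>S. f differentiable (at x)) \<and> continuous_on S (d1 f) \<and> continuous_on S (d2 f)"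

definition C2_on :: "(real \<times> real) set \<Rightarrow> (real \<times> real \<Rightarrow> real) \<Rightarrow> bool" where
  "C2_on S f \<longleftrightarrow> C1_on S f \<and> C1_on S (d1 f) \<and> C1_on S (d2 f)"

definition principal_eigenfunction ::
  "real \<Rightarrow> real \<Rightarrow> real \<Rightarrow> (real \<times> real \<Rightarrow> real) \<Rightarrow> bool" where
  "principal_eigenfunction L A lam \<phi> \<longleftrightarrow>
     continuous_on (D L) \<phi> \<and>
     C2_on (interior (D L)) \<phi> \<and>
     (\<forall>x\<in>interior (D L). - lap \<phi> x + A * (v x \<bullet> grad \<phi> x) = lam * \<phi> x) \<and>
     (\<forall>x\<in>frontier (D L). \<phi> x = 0) \<and>
     (\<forall>x\<in>interior (D L). \<phi> x > 0)"

end

theory Submission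
  imports Defs
begin


definition H1 :: "real \<times> real \<Rightarrow> real" where
  "H1 x = cos (pi * fst x) * sin (pi * snd x)"
definition H2 :: "real \<times> real \<Rightarrow> real" where
  "H2 x = sin (pi * fst x) * cos (pi * snd x)"
definition WW :: "(real \<times> real \<Rightarrow> real) \<Rightarrow> (real \<times> real \<Rightarrow> real) \<Rightarrow> real \<times> real \<Rightarrow> real" where
  "WW P1 P2 x = - H2 x * P1 x + H1 x * P2 x"
definition icell :: "real \<Rightarrow> real \<Rightarrow> (real \<times> real) set" where
  "icell k m = {k<..<k+1} \<times> {m<..<m+1}"

lemma sin_int_pi: "sin (pi * real_of_int k) = 0"
  using sin_times_pi_eq_0[of "real_of_int k"] by (simp add: mult.commute)

lemma cos_int_pi_sq: "(cos (pi * real_of_int k))^2 = 1"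
  using sin_int_pi[of k] sin_cos_squared_add[of "pi * real_of_int k"] by simp

lemma cos_int_pi_abs: "\<bar>cos (pi * real_of_int k)\<bar> = 1"
  using cos_int_pi_sq[of k] by (simp add: power2_eq_1_iff abs_if split: if_splits)

lemma sin_shift: "sin (pi * (real_of_int k + s)) = cos (pi * real_of_int k) * sin (pi * s)"
  by (simp add: distrib_left sin_add sin_int_pi)
lemma cos_shift: "cos (pi * (real_of_int k + s)) = cos (pi * real_of_int k) * cos (pi * s)"
  by (simp add: distrib_left cos_add sin_int_pi)

lemma d1_H: "d1 H x = H1 x"
proof -
  have "((\<lambda>t. H (t, snd x)) has_real_derivative H1 x) (at (fst x))"
    unfolding H_def H1_def
    by (auto intro!: derivative_eq_intros)
  then show ?thesis unfolding d1_def by (rule DERIV_imp_deriv)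
qed

lemma d2_H: "d2 H x = H2 x"
proof -
  have "((\<lambda>t. H (fst x, t)) has_real_derivative H2 x) (at (snd x))"
    unfolding H_def H2_def
    by (auto intro!: derivative_eq_intros)
  then show ?thesis unfolding d2_def by (rule DERIV_imp_deriv)
qed

lemma v_grad: "v x \<bullet> grad f x = WW (d1 f) (d2 f) x"
  by (simp add: v_def grad_def WW_def d1_H d2_H)

lemma partials_has_derivative:
  assumes "f differentiable (at x)"
  shows "(f has_derivative (\<lambda>h. d1 f x * fst h + d2 f x * snd h)) (at x)"
proof -
  obtain f' where f': "(f has_derivative f') (at x)" using assms differentiable_def by blast
  have lin: "linear f'" using f' has_derivative_linear by blast
  have sc1: "f' (a,0) = f' (1,0) * a" for a
  proof -
    have "f' (a *\<^sub>R (1,0)) = a *\<^sub>R f' (1,0)" by (rule linear_scale[OF lin])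
    then show ?thesis by simp
  qed
  have sc2: "f' (0,a) = f' (0,1) * a" for a
  proof -
    have "f' (a *\<^sub>R (0,1)) = a *\<^sub>R f' (0,1)" by (rule linear_scale[OF lin])
    then show ?thesis by simp
  qed
  have e1: "((\<lambda>t. f (t, snd x)) has_real_derivative f' (1,0)) (at (fst x))"
  proof -
    have "((\<lambda>t. (t, snd x)) has_derivative (\<lambda>h. (h, 0))) (at (fst x))"
      by (intro has_derivative_Pair has_derivative_ident has_derivative_const)
    moreover have "(f has_derivative f') (at ((\<lambda>t. (t, snd x)) (fst x)))" using f' by simp
    ultimately have "((\<lambda>t. f (t, snd x)) has_derivative (\<lambda>h. f' (h,0))) (at (fst x))"
      by (rule has_derivative_compose)
    moreover have "(\<lambda>h. f' (h,0)) = (*) (f' (1,0))" by (rule ext) (rule sc1)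
    ultimately show ?thesis unfolding has_field_derivative_def by simp
  qed
  have e2: "((\<lambda>t. f (fst x, t)) has_real_derivative f' (0,1)) (at (snd x))"
  proof -
    have "((\<lambda>t. (fst x, t)) has_derivative (\<lambda>h. (0, h))) (at (snd x))"
      by (intro has_derivative_Pair has_derivative_ident has_derivative_const)
    moreover have "(f has_derivative f') (at ((\<lambda>t. (fst x, t)) (snd x)))" using f' by simp
    ultimately have "((\<lambda>t. f (fst x, t)) has_derivative (\<lambda>h. f' (0,h))) (at (snd x))"
      by (rule has_derivative_compose)
    moreover have "(\<lambda>h. f' (0,h)) = (*) (f' (0,1))" by (rule ext) (rule sc2)
    ultimately show ?thesis unfolding has_field_derivative_def by simp
  qed
  have d1e: "d1 f x = f' (1,0)" unfolding d1_def using e1 by (rule DERIV_imp_deriv)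
  have d2e: "d2 f x = f' (0,1)" unfolding d2_def using e2 by (rule DERIV_imp_deriv)
  have fh: "f' h = d1 f x * fst h + d2 f x * snd h" for h
  proof -
    obtain a b where h: "h = (a,b)" by (cases h)
    have "f' ((a,0) + (0,b)) = f' (a,0) + f' (0,b)" by (rule linear_add[OF lin])
    then have "f' (a,b) = f' (1,0) * a + f' (0,1) * b" using sc1[of a] sc2[of b] by simp
    then show ?thesis by (simp add: h d1e d2e)
  qed
  have "(\<lambda>h. d1 f x * fst h + d2 f x * snd h) = f'" by (rule ext) (simp add: fh)
  then show ?thesis using f' by simp
qed


definition bb :: "real \<Rightarrow> real" where "bb c = arcsin (max (-1) (min 1 (sqrt (pi * c)))) / pi"

lemma bb_eq: "0 < c \<Longrightarrow> pi * c < 1 \<Longrightarrow> bb c = arcsin (sqrt (pi * c)) / pi"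
proof -
  assume a: "0 < c" "pi * c < 1"
  have "sqrt (pi * c) < sqrt 1" using a by (intro real_sqrt_less_mono) auto
  then have s1: "sqrt (pi * c) < 1" by simp
  have s0: "0 < sqrt (pi * c)" using a by simp
  have "min 1 (sqrt (pi * c)) = sqrt (pi * c)" by (rule min_absorb2) (use s1 in linarith)
  moreover have "max (-1) (sqrt (pi * c)) = sqrt (pi * c)" by (rule max_absorb2) (use s0 in linarith)
  ultimately show ?thesis unfolding bb_def by simp
qed
definition tau :: "real \<Rightarrow> real \<Rightarrow> real" where "tau c s = arcsin (pi * c / sin (pi * s)) / pi"
definition gg :: "real \<Rightarrow> real \<Rightarrow> real" where "gg c s = sqrt ((sin (pi * s))\<^sup>2 - (pi * c)\<^sup>2)"
definition gam :: "real \<Rightarrow> real \<Rightarrow> real \<Rightarrow> real \<Rightarrow> real \<times> real" where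
  "gam k m c x = (x, m + tau c (x - k))"

lemma sin_le_mono_pi: "0 \<le> a \<Longrightarrow> a \<le> b \<Longrightarrow> b \<le> 1/2 \<Longrightarrow> sin (pi * a) \<le> sin (pi * b)"
proof -
  assume a: "0 \<le> a" "a \<le> b" "b \<le> 1/2"
  have "0 \<le> pi * a" using a by simp
  moreover have "pi * a \<le> pi * b" using a by simp
  moreover have "pi * b \<le> pi * (1/2)" using a by (intro mult_left_mono) auto
  ultimately show ?thesis using pi_gt_zero by (intro sin_monotone_2pi_le) linarith+
qed

lemma sin_less_mono_pi: "0 \<le> a \<Longrightarrow> a < b \<Longrightarrow> b \<le> 1/2 \<Longrightarrow> sin (pi * a) < sin (pi * b)"
proof -
  assume a: "0 \<le> a" "a < b" "b \<le> 1/2"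
  have "0 \<le> pi * a" using a by simp
  moreover have "pi * a < pi * b" using a by simp
  moreover have "pi * b \<le> pi * (1/2)" using a by (intro mult_left_mono) auto
  ultimately show ?thesis using pi_gt_zero by (intro sin_monotone_2pi) linarith+
qed

lemma sin_pi_refl: "sin (pi * (1 - s)) = sin (pi * s)"
proof -
  have "pi * (1 - s) = pi - pi * s" by (simp add: algebra_simps)
  then show ?thesis by simp
qed

lemma sin_arcsin_id: "-1 \<le> y \<Longrightarrow> y \<le> 1 \<Longrightarrow> sin (pi * (arcsin y / pi)) = y"
  by simp

lemma cfacts:
  assumes "0 < c" "pi * c < 3/4"
  shows "0 < bb c" "bb c < 1/2" "sin (pi * bb c) = sqrt (pi * c)"
    "0 < sqrt (pi * c)" "sqrt (pi * c) < 1" "pi * c < sqrt (pi * c)"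
proof -
  have bbe: "bb c = arcsin (sqrt (pi * c)) / pi" using assms by (intro bb_eq) auto
  have pc: "0 < pi * c" using assms by simp
  show sp: "0 < sqrt (pi * c)" using pc by simp
  show s1: "sqrt (pi * c) < 1" proof -
    have "sqrt (pi * c) < sqrt 1" using assms by (intro real_sqrt_less_mono) auto
    then show ?thesis by simp
  qed
  have "arcsin 0 < arcsin (sqrt (pi * c))" by (rule arcsin_less_arcsin) (use sp s1 in auto)
  then show "0 < bb c" unfolding bbe by simp
  have "arcsin (sqrt (pi * c)) < pi / 2" using arcsin_lt_bounded[of "sqrt (pi*c)"] sp s1 by auto
  then show "bb c < 1/2" unfolding bbe by (simp add: field_simps)
  show "sin (pi * bb c) = sqrt (pi * c)" unfolding bbe using sp s1 by (intro sin_arcsin_id) linarith+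
  have "pi * c < 1" using assms by simp
  then have "sqrt (pi * c) * sqrt (pi * c) < 1 * sqrt (pi * c)"
    using sp s1 by (intro mult_strict_right_mono) auto
  then show "pi * c < sqrt (pi * c)" using pc by simp
qed

lemma sin_ge_on_arc:
  assumes "0 < c" "pi * c < 3/4" "bb c \<le> s" "s \<le> 1 - bb c"
  shows "sqrt (pi * c) \<le> sin (pi * s)"
proof (cases "s \<le> 1/2")
  case True
  have "sin (pi * bb c) \<le> sin (pi * s)"
    using cfacts[OF assms(1,2)] assms True by (intro sin_le_mono_pi) auto
  then show ?thesis using cfacts[OF assms(1,2)] by simp
next
  case False
  have "sin (pi * bb c) \<le> sin (pi * (1 - s))"
    using cfacts[OF assms(1,2)] assms False by (intro sin_le_mono_pi) auto
  then show ?thesis using cfacts[OF assms(1,2)] by (simp add: sin_pi_refl)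
qed

lemma on_arc_of_sin_ge:
  assumes "0 < c" "pi * c < 3/4" "0 \<le> s" "s \<le> 1" "sqrt (pi * c) \<le> sin (pi * s)"
  shows "bb c \<le> s \<and> s \<le> 1 - bb c"
proof (rule ccontr)
  assume "\<not> (bb c \<le> s \<and> s \<le> 1 - bb c)"
  then consider "s < bb c" | "1 - bb c < s" by linarith
  then show False
  proof cases
    case 1
    then have "sin (pi * s) < sin (pi * bb c)"
      using cfacts[OF assms(1,2)] assms by (intro sin_less_mono_pi) auto
    then show False using cfacts[OF assms(1,2)] assms by simp
  next
    case 2
    then have "sin (pi * (1 - s)) < sin (pi * bb c)"
      using cfacts[OF assms(1,2)] assms by (intro sin_less_mono_pi) auto
    then show False using cfacts[OF assms(1,2)] assms by (simp add: sin_pi_refl)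
  qed
qed

lemma arc_point_facts:
  assumes "0 < c" "pi * c < 3/4" "bb c \<le> s" "s \<le> 1 - bb c"
  shows "0 < sin (pi * s)" "0 < pi * c / sin (pi * s)" "pi * c / sin (pi * s) < 1"
    "pi * c / sin (pi * s) \<le> sqrt (pi * c)"
    "sin (pi * tau c s) = pi * c / sin (pi * s)"
    "cos (pi * tau c s) = sqrt (1 - (pi * c / sin (pi * s))\<^sup>2)"
    "0 < tau c s" "tau c s < 1/2"
    "gg c s = sin (pi * s) * sqrt (1 - (pi * c / sin (pi * s))\<^sup>2)"
    "sin (pi * s) / 2 \<le> gg c s" "0 < gg c s"
    "0 < s" "s < 1"
proof -
  note cf = cfacts[OF assms(1,2)]
  have sg: "sqrt (pi * c) \<le> sin (pi * s)" by (rule sin_ge_on_arc[OF assms])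
  show sp: "0 < sin (pi * s)" using cf sg by linarith
  have pc: "0 < pi * c" using assms by simp
  show rp: "0 < pi * c / sin (pi * s)" using sp pc by simp
  have "pi * c = sqrt (pi * c) * sqrt (pi * c)" using pc by simp
  also have "\<dots> \<le> sqrt (pi * c) * sin (pi * s)" using sg cf by (intro mult_left_mono) auto
  finally have "pi * c \<le> sqrt (pi * c) * sin (pi * s)" .
  then show rs: "pi * c / sin (pi * s) \<le> sqrt (pi * c)" using sp by (simp add: divide_le_eq)
  then show r1: "pi * c / sin (pi * s) < 1" using cf by linarith
  show "sin (pi * tau c s) = pi * c / sin (pi * s)" unfolding tau_def using rp r1 by simp
  show "cos (pi * tau c s) = sqrt (1 - (pi * c / sin (pi * s))\<^sup>2)" unfolding tau_def
    using rp r1 by (simp add: cos_arcsin)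
  have "arcsin 0 < arcsin (pi * c / sin (pi * s))" by (rule arcsin_less_arcsin) (use rp r1 in auto)
  then show "0 < tau c s" unfolding tau_def by simp
  have "arcsin (pi * c / sin (pi * s)) < pi / 2" using arcsin_lt_bounded[of "pi * c / sin (pi * s)"] rp r1 by auto
  then show "tau c s < 1/2" unfolding tau_def by (simp add: field_simps)
  have "(sin (pi * s))\<^sup>2 - (pi * c)\<^sup>2 = (sin (pi * s))\<^sup>2 * (1 - (pi * c / sin (pi * s))\<^sup>2)"
    using sp by (simp add: field_simps)
  then show gge: "gg c s = sin (pi * s) * sqrt (1 - (pi * c / sin (pi * s))\<^sup>2)"
    unfolding gg_def using sp by (simp add: real_sqrt_mult)
  have "(pi * c / sin (pi * s))\<^sup>2 \<le> (sqrt (pi * c))\<^sup>2" using rs rp by (intro power_mono) auto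
  also have "\<dots> = pi * c" using pc by simp
  finally have "(pi * c / sin (pi * s))\<^sup>2 \<le> 3/4" using assms by linarith
  then have "1/4 \<le> 1 - (pi * c / sin (pi * s))\<^sup>2" by linarith
  then have "sqrt (1/4) \<le> sqrt (1 - (pi * c / sin (pi * s))\<^sup>2)" by (rule real_sqrt_le_mono)
  moreover have "sqrt (1/4::real) = 1/2" by (simp add: real_sqrt_divide)
  ultimately have "1/2 \<le> sqrt (1 - (pi * c / sin (pi * s))\<^sup>2)" by simp
  then show "sin (pi * s) / 2 \<le> gg c s" unfolding gge using sp
    by (metis divide_le_eq_numeral1(1) mult_left_mono less_eq_real_def mult.commute times_divide_eq_right mult_1_right)
  then show "0 < gg c s" using sp by linarith
  show "0 < s" using cf assms by linarith
  show "s < 1" using cf assms by linarith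
qed


definition tau' :: "real \<Rightarrow> real \<Rightarrow> real" where
  "tau' c s = - (pi * c * cos (pi * s)) / ((sin (pi * s))\<^sup>2 * sqrt (1 - (pi * c / sin (pi * s))\<^sup>2))"

definition good :: "real \<Rightarrow> real \<Rightarrow> (real \<times> real \<Rightarrow> real) \<Rightarrow> (real \<times> real \<Rightarrow> real) \<Rightarrow> (real \<times> real \<Rightarrow> real) \<Rightarrow> bool" where
  "good k m f P1 P2 \<longleftrightarrow> (\<forall>x\<in>icell k m. (f has_derivative (\<lambda>h. P1 x * fst h + P2 x * snd h)) (at x))
     \<and> continuous_on (icell k m) P1 \<and> continuous_on (icell k m) P2"

definition Dfun :: "real \<Rightarrow> real \<Rightarrow> real \<Rightarrow> (real \<times> real \<Rightarrow> real) \<Rightarrow> (real \<times> real \<Rightarrow> real) \<Rightarrow> real \<Rightarrow> real" where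
  "Dfun k m c P1 P2 x = P1 (gam k m c x) + tau' c (x - k) * P2 (gam k m c x)"

lemma tau_deriv:
  assumes "0 < sin (pi * s)" "0 < pi * c / sin (pi * s)" "pi * c / sin (pi * s) < 1"
  shows "(tau c has_real_derivative tau' c s) (at s)"
proof -
  let ?r = "pi * c / sin (pi * s)"
  have d1: "((\<lambda>s. pi * c / sin (pi * s)) has_real_derivative (- (pi * c) * (pi * cos (pi * s)) / (sin (pi * s))\<^sup>2)) (at s)"
    using assms(1) by (auto intro!: derivative_eq_intros simp: power2_eq_square)
  have d2: "(arcsin has_real_derivative inverse (sqrt (1 - ?r\<^sup>2))) (at ?r)"
    by (rule DERIV_arcsin) (use assms in auto)
  have "((\<lambda>s. arcsin (pi * c / sin (pi * s))) has_real_derivative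
      inverse (sqrt (1 - ?r\<^sup>2)) * (- (pi * c) * (pi * cos (pi * s)) / (sin (pi * s))\<^sup>2)) (at s)"
    by (rule DERIV_chain2[OF d2 d1])
  then have "((\<lambda>s. arcsin (pi * c / sin (pi * s)) / pi) has_real_derivative
      inverse (sqrt (1 - ?r\<^sup>2)) * (- (pi * c) * (pi * cos (pi * s)) / (sin (pi * s))\<^sup>2) / pi) (at s)"
    by (rule DERIV_cdivide)
  moreover have "inverse (sqrt (1 - ?r\<^sup>2)) * (- (pi * c) * (pi * cos (pi * s)) / (sin (pi * s))\<^sup>2) / pi = tau' c s"
    unfolding tau'_def by (simp add: field_simps)
  ultimately show ?thesis unfolding tau_def[abs_def] by simp
qed


lemma gam_in_icell:
  assumes "0 < c" "pi * c < 3/4" "bb c \<le> x - k" "x - k \<le> 1 - bb c"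
  shows "gam k m c x \<in> icell k m"
  using arc_point_facts[OF assms] unfolding gam_def icell_def by auto

lemma Gamma_deriv:
  assumes g: "good k m f P1 P2"
    and a: "0 < c" "pi * c < 3/4" "bb c \<le> x - k" "x - k \<le> 1 - bb c"
  shows "((\<lambda>x. f (gam k m c x)) has_real_derivative Dfun k m c P1 P2 x) (at x)"
proof -
  note af = arc_point_facts[OF a(1-4)]
  have dt: "(tau c has_real_derivative tau' c (x - k)) (at (x - k))"
    by (rule tau_deriv) (use af in auto)
  have dk: "((\<lambda>x. x - k) has_real_derivative 1) (at x)" by (auto intro!: derivative_eq_intros)
  have "((\<lambda>x. tau c (x - k)) has_real_derivative tau' c (x - k) * 1) (at x)"
    by (rule DERIV_chain2[where g="\<lambda>x. x - k", OF _ dk]) (use dt in simp)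
  then have "((\<lambda>x. m + tau c (x - k)) has_real_derivative 0 + tau' c (x - k) * 1) (at x)"
    by (intro DERIV_add DERIV_const)
  then have dt2: "((\<lambda>x. m + tau c (x - k)) has_real_derivative tau' c (x - k)) (at x)" by simp
  have dg: "(gam k m c has_derivative (\<lambda>h. (h, tau' c (x - k) * h))) (at x)"
    unfolding gam_def[abs_def]
    by (intro has_derivative_Pair has_derivative_ident has_field_derivative_imp_has_derivative[OF dt2])
  have df: "(f has_derivative (\<lambda>h. P1 (gam k m c x) * fst h + P2 (gam k m c x) * snd h)) (at (gam k m c x))"
    using g gam_in_icell[OF a] unfolding good_def by blast
  have "((\<lambda>x. f (gam k m c x)) has_derivative
      (\<lambda>h. P1 (gam k m c x) * fst (h, tau' c (x - k) * h) + P2 (gam k m c x) * snd (h, tau' c (x - k) * h))) (at x)"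
    by (rule has_derivative_compose[OF dg df])
  moreover have "(\<lambda>h. P1 (gam k m c x) * fst (h, tau' c (x - k) * h) + P2 (gam k m c x) * snd (h, tau' c (x - k) * h))
      = (*) (Dfun k m c P1 P2 x)"
    unfolding Dfun_def by (rule ext) (simp add: algebra_simps)
  ultimately show ?thesis unfolding has_field_derivative_def by simp
qed

lemma WW_gam:
  fixes k m :: int and x :: real
  assumes a: "0 < c" "pi * c < 3/4" "bb c \<le> x - real_of_int k" "x - real_of_int k \<le> 1 - bb c"
  shows "WW P1 P2 (gam k m c x) = - (cos (pi * k) * cos (pi * m)) * gg c (x - real_of_int k) * Dfun k m c P1 P2 x"
proof -
  define s where "s = x - k"
  have xs: "x = real_of_int k + s" unfolding s_def by simp
  note af = arc_point_facts[OF a[folded s_def]]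
  define q where "q = sqrt (1 - (pi * c / sin (pi * s))\<^sup>2)"
  have q0: "0 < q" unfolding q_def using af by (simp add: power_less_one_iff abs_less_iff)
  have sn: "sin (pi * s) \<noteq> 0" using af by simp
  have H1g: "H1 (gam k m c x) = cos (pi * k) * cos (pi * s) * (cos (pi * m) * (pi * c / sin (pi * s)))"
    unfolding H1_def gam_def using af by (simp add: xs s_def[symmetric] sin_shift cos_shift)
  have H2g: "H2 (gam k m c x) = cos (pi * k) * sin (pi * s) * (cos (pi * m) * q)"
    unfolding H2_def gam_def q_def using af by (simp add: xs s_def[symmetric] sin_shift cos_shift)
  have ggq: "gg c s = sin (pi * s) * q" using af unfolding q_def by simp
  have tq: "tau' c s = - (pi * c * cos (pi * s)) / ((sin (pi * s))\<^sup>2 * q)" unfolding tau'_def q_def by simp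
  show ?thesis
    unfolding WW_def Dfun_def s_def[symmetric] H1g H2g ggq tq
    using q0 sn by (simp add: field_simps power2_eq_square)
qed


lemma open_icell: "open (icell k m)"
  unfolding icell_def by (intro open_Times open_greaterThanLessThan)

lemma isCont_tau2:
  assumes "0 < sin (pi * (snd p0 - k))" "0 < pi * fst p0 / sin (pi * (snd p0 - k))"
    "pi * fst p0 / sin (pi * (snd p0 - k)) < 1"
  shows "isCont (\<lambda>p::real\<times>real. tau (fst p) (snd p - k)) p0"
proof -
  have c1: "isCont (\<lambda>p::real\<times>real. pi * fst p / sin (pi * (snd p - k))) p0"
    using assms(1) by (intro continuous_intros) auto
  have "isCont (\<lambda>p::real\<times>real. arcsin (pi * fst p / sin (pi * (snd p - k)))) p0"
    by (rule isCont_o2[OF c1 isCont_arcsin]) (use assms in auto)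
  then show ?thesis unfolding tau_def by (intro continuous_intros) auto
qed

lemma isCont_tau'2:
  assumes "0 < sin (pi * (snd p0 - k))" "0 < pi * fst p0 / sin (pi * (snd p0 - k))"
    "pi * fst p0 / sin (pi * (snd p0 - k)) < 1"
  shows "isCont (\<lambda>p::real\<times>real. tau' (fst p) (snd p - k)) p0"
proof -
  have "0 < 1 - (pi * fst p0 / sin (pi * (snd p0 - k)))\<^sup>2"
    using assms by (simp add: power_less_one_iff abs_less_iff)
  then have "sqrt (1 - (pi * fst p0 / sin (pi * (snd p0 - k)))\<^sup>2) \<noteq> 0" by simp
  then show ?thesis unfolding tau'_def using assms(1) by (intro continuous_intros) auto
qed

lemma isCont_gg2: "isCont (\<lambda>p::real\<times>real. gg (fst p) (snd p - k)) p0"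
  unfolding gg_def by (intro continuous_intros)

lemma isCont_WW:
  assumes "good k m f P1 P2" "y \<in> icell k m"
  shows "isCont (WW P1 P2) y"
proof -
  have "isCont P1 y" "isCont P2 y"
    using assms open_icell[of k m] continuous_on_eq_continuous_at unfolding good_def by blast+
  then show ?thesis unfolding WW_def[abs_def] H1_def H2_def by (intro continuous_intros) auto
qed

lemma isCont_gam2:
  assumes a: "0 < fst p0" "pi * fst p0 < 3/4" "bb (fst p0) \<le> snd p0 - k" "snd p0 - k \<le> 1 - bb (fst p0)"
  shows "isCont (\<lambda>p::real\<times>real. gam k m (fst p) (snd p)) p0"
proof -
  note af = arc_point_facts[OF a]
  have "isCont (\<lambda>p::real\<times>real. tau (fst p) (snd p - k)) p0"
    by (rule isCont_tau2) (use af in auto)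
  then show ?thesis unfolding gam_def by (intro continuous_intros) auto
qed

definition Rg :: "real \<Rightarrow> real \<Rightarrow> real \<Rightarrow> (real \<times> real) set" where
  "Rg k m d = {p. d \<le> fst p \<and> fst p \<le> 3/2 * d \<and> k + bb (fst p) \<le> snd p \<and> snd p \<le> k + 1 - bb (fst p)}"

definition Fint :: "real \<Rightarrow> real \<Rightarrow> (real \<times> real \<Rightarrow> real) \<Rightarrow> (real \<times> real \<Rightarrow> real) \<Rightarrow> real \<times> real \<Rightarrow> real" where
  "Fint k m P1 P2 p = (WW P1 P2 (gam k m (fst p) (snd p)))\<^sup>2 / gg (fst p) (snd p - k)"

lemma Rg_c:
  assumes "p \<in> Rg k m d" "0 < d" "d < 1 / (2 * pi)"
  shows "0 < fst p" "pi * fst p < 3/4" "bb (fst p) \<le> snd p - k" "snd p - k \<le> 1 - bb (fst p)"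
proof -
  show "0 < fst p" using assms unfolding Rg_def by auto
  have "fst p \<le> 3/2 * d" using assms unfolding Rg_def by auto
  then have "pi * fst p \<le> pi * (3/2 * d)" by simp
  moreover have "2 * pi * d < 1" using assms(3) by (simp add: field_simps)
  ultimately show "pi * fst p < 3/4" by linarith
  show "bb (fst p) \<le> snd p - k" "snd p - k \<le> 1 - bb (fst p)" using assms unfolding Rg_def by auto
qed

lemma Fint_cont:
  assumes g: "good k m f P1 P2" and d: "0 < d" "d < 1 / (2 * pi)"
  shows "continuous_on (Rg k m d) (Fint k m P1 P2)"
proof (rule continuous_at_imp_continuous_on, rule ballI)
  fix p assume p: "p \<in> Rg k m d"
  note a = Rg_c[OF p d]
  note af = arc_point_facts[OF a]
  have c1: "isCont (\<lambda>p::real\<times>real. gam k m (fst p) (snd p)) p" by (rule isCont_gam2[OF a])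
  have c2: "isCont (WW P1 P2) (gam k m (fst p) (snd p))"
    by (rule isCont_WW[OF g]) (rule gam_in_icell[OF a])
  have "isCont (\<lambda>p. WW P1 P2 (gam k m (fst p) (snd p))) p" by (rule isCont_o2[OF c1 c2])
  moreover have "gg (fst p) (snd p - k) \<noteq> 0" using af(11) by linarith
  ultimately show "isCont (Fint k m P1 P2) p" unfolding Fint_def[abs_def]
    by (intro continuous_intros isCont_gg2) auto
qed

lemma cont_bb: "continuous_on UNIV bb"
  unfolding bb_def by (intro continuous_intros) auto

lemma closed_Rg: "closed (Rg k m d)"
proof -
  have e: "Rg k m d = {p. d \<le> fst p} \<inter> {p. fst p \<le> 3/2 * d} \<inter> {p. k + bb (fst p) \<le> snd p} \<inter> {p. snd p \<le> k + 1 - bb (fst p)}"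
    unfolding Rg_def by auto
  have cb: "continuous_on UNIV (\<lambda>p::real\<times>real. bb (fst p))"
    by (rule continuous_on_compose2[OF cont_bb]) (auto intro: continuous_intros)
  show ?thesis unfolding e
    by (intro closed_Int closed_Collect_le continuous_intros cb)
qed


definition Gf :: "real \<Rightarrow> real \<Rightarrow> real \<Rightarrow> (real \<times> real \<Rightarrow> real) \<Rightarrow> (real \<times> real \<Rightarrow> real) \<Rightarrow> real \<times> real \<Rightarrow> real" where
  "Gf k m d P1 P2 p = indicator (Rg k m d) p * Fint k m P1 P2 p"

lemma Gf_meas:
  assumes "good k m f P1 P2" "0 < d" "d < 1 / (2 * pi)"
  shows "Gf k m d P1 P2 \<in> borel_measurable borel"
proof -
  have "(\<lambda>p. indicator (Rg k m d) p *\<^sub>R Fint k m P1 P2 p) \<in> borel_measurable borel"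
    by (rule borel_measurable_continuous_on_indicator[OF borel_closed[OF closed_Rg] Fint_cont[OF assms]])
  then show ?thesis unfolding Gf_def[abs_def] by simp
qed

lemma Gf_nonneg:
  assumes "0 < d" "d < 1 / (2 * pi)"
  shows "0 \<le> Gf k m d P1 P2 p"
proof (cases "p \<in> Rg k m d")
  case True
  have "0 < gg (fst p) (snd p - k)" using arc_point_facts[OF Rg_c[OF True assms]] by blast
  then show ?thesis unfolding Gf_def Fint_def using True by simp
qed (simp add: Gf_def)

lemma pi_half_range: "0 \<le> t \<Longrightarrow> t \<le> 1/2 \<Longrightarrow> 0 \<le> pi * t \<and> pi * t \<le> pi / 2"
proof -
  assume a: "0 \<le> t" "t \<le> 1/2"
  have "pi * t \<le> pi * (1/2)" using a by (intro mult_left_mono) auto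
  then show ?thesis using a by simp
qed

lemma sq_sin_cos_helper: "(a::real)\<^sup>2 - (a * sin u)\<^sup>2 = (a * cos u)\<^sup>2"
proof -
  have "a\<^sup>2 * (sin u)\<^sup>2 + a\<^sup>2 * (cos u)\<^sup>2 = a\<^sup>2" by (metis distrib_left sin_cos_squared_add mult_1_right)
  then show ?thesis by (simp add: power_mult_distrib)
qed

lemma slice_bound:
  fixes k m :: real
  assumes g: "good k m f P1 P2" and d: "0 < d" "d < 1 / (2 * pi)"
  shows "(\<integral>\<^sup>+c. ennreal (Gf k m d P1 P2 (c, x)) \<partial>lborel)
     \<le> (\<integral>\<^sup>+y. ennreal (indicator (icell k m) (x, y) * (WW P1 P2 (x, y))\<^sup>2) \<partial>lborel)"
proof (cases "\<exists>c. (c, x) \<in> Rg k m d")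
  case False
  then have "\<And>c. Gf k m d P1 P2 (c, x) = 0" unfolding Gf_def by simp
  then show ?thesis by simp
next
  case True
  then obtain c0 where c0: "(c0, x) \<in> Rg k m d" by blast
  note a0 = Rg_c[OF c0 d]
  note af0 = arc_point_facts[OF a0[unfolded fst_conv snd_conv]]
  define s where "s = x - k"
  define ss where "ss = sin (pi * s)"
  have ss0: "0 < ss" unfolding ss_def s_def using af0 by simp
  have ss1: "ss \<le> 1" unfolding ss_def by simp
  define cmax where "cmax = min (3/2 * d) (ss\<^sup>2 / pi)"
  have cmax0: "0 < cmax" unfolding cmax_def using d ss0 by simp
  have pcm: "pi * cmax \<le> ss\<^sup>2" unfolding cmax_def by (simp add: min_def field_simps)
  define r where "r = pi * cmax / ss"
  have r0: "0 < r" unfolding r_def using cmax0 ss0 by simp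
  have r1: "r \<le> ss" unfolding r_def using pcm ss0 by (simp add: divide_le_eq power2_eq_square)
  define tmax where "tmax = arcsin r / pi"
  have tm0: "0 < tmax"
  proof -
    have "arcsin 0 < arcsin r" by (rule arcsin_less_arcsin) (use r0 r1 ss1 in auto)
    then show ?thesis unfolding tmax_def by simp
  qed
  have tm1: "tmax \<le> 1/2"
  proof -
    have "arcsin r \<le> pi/2" using arcsin_bounded[of r] r0 r1 ss1 by auto
    then show ?thesis unfolding tmax_def by (simp add: field_simps)
  qed
  define gf where "gf y = ss * sin (pi * (y - m)) / pi" for y :: real
  define gf' where "gf' y = ss * cos (pi * (y - m))" for y :: real
  have gm: "gf m = 0" unfolding gf_def by simp
  have gM: "gf (m + tmax) = cmax"
  proof -
    have "sin (pi * tmax) = r" unfolding tmax_def using r0 r1 ss1 by simp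
    then show ?thesis unfolding gf_def r_def using ss0 by simp
  qed
  have Gcx: "\<And>c. Gf k m d P1 P2 (c, x) \<noteq> 0 \<Longrightarrow> c \<in> {0..cmax}"
  proof -
    fix c assume "Gf k m d P1 P2 (c, x) \<noteq> 0"
    then have cR: "(c, x) \<in> Rg k m d" unfolding Gf_def by (auto simp: indicator_def split: if_splits)
    note a = Rg_c[OF cR d]
    have "sqrt (pi * c) \<le> ss" unfolding ss_def s_def using sin_ge_on_arc[OF a[unfolded fst_conv snd_conv]] .
    then have "(sqrt (pi * c))\<^sup>2 \<le> ss\<^sup>2" using a by (intro power_mono) auto
    then have "pi * c \<le> ss\<^sup>2" using a by simp
    then have "c \<le> ss\<^sup>2 / pi" by (simp add: field_simps)
    moreover have "c \<le> 3/2 * d" using cR unfolding Rg_def by simp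
    ultimately show "c \<in> {0..cmax}" using a unfolding cmax_def by simp
  qed
  have meas: "(\<lambda>c. ennreal (Gf k m d P1 P2 (c, x))) \<in> borel_measurable borel"
    using Gf_meas[OF g d] by measurable
  have "(\<integral>\<^sup>+c. ennreal (Gf k m d P1 P2 (c, x)) \<partial>lborel)
      = (\<integral>\<^sup>+c. ennreal (Gf k m d P1 P2 (c, x)) * indicator {gf m .. gf (m + tmax)} c \<partial>lborel)"
    unfolding gm gM
    by (rule nn_integral_cong) (use Gcx in \<open>force simp: indicator_def\<close>)
  also have "\<dots> = (\<integral>\<^sup>+y. ennreal (Gf k m d P1 P2 (gf y, x)) * ennreal (gf' y) * indicator {m .. m + tmax} y \<partial>lborel)"
  proof (rule nn_integral_substitution_aux[OF meas])
    show "\<And>y. y \<in> {m..m + tmax} \<Longrightarrow> (gf has_real_derivative gf' y) (at y)"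
      unfolding gf_def[abs_def] gf'_def by (auto intro!: derivative_eq_intros)
    show "continuous_on {m..m + tmax} gf'" unfolding gf'_def[abs_def] by (intro continuous_intros)
    show "\<And>y. y \<in> {m..m + tmax} \<Longrightarrow> 0 \<le> gf' y"
    proof -
      fix y assume y: "y \<in> {m..m + tmax}"
      have "0 \<le> pi * (y - m) \<and> pi * (y - m) \<le> pi / 2" using y tm1 by (intro pi_half_range) auto
      then have "0 \<le> cos (pi * (y - m))" using pi_gt_zero by (intro cos_ge_zero) linarith+
      then show "0 \<le> gf' y" unfolding gf'_def using ss0 by simp
    qed
  qed (use tm0 in auto)
  also have "\<dots> \<le> (\<integral>\<^sup>+y. ennreal (indicator (icell k m) (x, y) * (WW P1 P2 (x, y))\<^sup>2) \<partial>lborel)"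
  proof (rule nn_integral_mono)
    fix y
    show "ennreal (Gf k m d P1 P2 (gf y, x)) * ennreal (gf' y) * indicator {m .. m + tmax} y
        \<le> ennreal (indicator (icell k m) (x, y) * (WW P1 P2 (x, y))\<^sup>2)"
    proof (cases "y \<in> {m .. m + tmax} \<and> (gf y, x) \<in> Rg k m d")
      case False
      then have "ennreal (Gf k m d P1 P2 (gf y, x)) * ennreal (gf' y) * indicator {m .. m + tmax} y = 0"
        unfolding Gf_def by (auto simp: indicator_def)
      then show ?thesis by (metis zero_le)
    next
      case True
      then have y: "m \<le> y" "y \<le> m + tmax" and R: "(gf y, x) \<in> Rg k m d" by auto
      note a = Rg_c[OF R d]
      have a': "0 < gf y" "pi * gf y < 3/4" "bb (gf y) \<le> x - k" "x - k \<le> 1 - bb (gf y)" using a by auto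
      have ym: "0 \<le> pi * (y - m)" "pi * (y - m) \<le> pi / 2" using pi_half_range[of "y - m"] y tm1 by auto
      have cs0: "0 \<le> cos (pi * (y - m))" using ym pi_gt_zero by (intro cos_ge_zero) linarith+
      have tauy: "tau (gf y) s = y - m"
      proof -
        have "pi * gf y / sin (pi * s) = sin (pi * (y - m))" unfolding gf_def ss_def using ss0 ss_def by simp
        then have "tau (gf y) s = arcsin (sin (pi * (y - m))) / pi" unfolding tau_def by simp
        also have "\<dots> = y - m" using ym pi_gt_zero by (subst arcsin_sin) (linarith, linarith, simp)
        finally show ?thesis .
      qed
      have gamy: "gam k m (gf y) x = (x, y)" unfolding gam_def using tauy s_def by simp
      have icy: "(x, y) \<in> icell k m" using gam_in_icell[OF a', of m] gamy by simp
      have ggy: "gg (gf y) s = gf' y"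
      proof -
        have "pi * gf y = ss * sin (pi * (y - m))" unfolding gf_def by simp
        then have "(sin (pi * s))\<^sup>2 - (pi * gf y)\<^sup>2 = (ss * cos (pi * (y - m)))\<^sup>2"
          unfolding ss_def[symmetric] by (simp only: sq_sin_cos_helper)
        then show ?thesis unfolding gg_def gf'_def using ss0 cs0 by simp
      qed
      have "Gf k m d P1 P2 (gf y, x) * gf' y = (if gf' y = 0 then 0 else (WW P1 P2 (x, y))\<^sup>2)"
        unfolding Gf_def Fint_def using R gamy ggy s_def by auto
      moreover have "0 \<le> gf' y" unfolding gf'_def using ss0 cs0 by simp
      ultimately have "ennreal (Gf k m d P1 P2 (gf y, x)) * ennreal (gf' y)
          = ennreal (if gf' y = 0 then 0 else (WW P1 P2 (x, y))\<^sup>2)"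
        using Gf_nonneg[OF d] by (simp add: ennreal_mult''[symmetric])
      then show ?thesis using icy y by (auto simp: indicator_def)
    qed
  qed
  finally show ?thesis .
qed


definition Ireg :: "real \<Rightarrow> real \<Rightarrow> real \<Rightarrow> (real \<times> real \<Rightarrow> real) \<Rightarrow> (real \<times> real \<Rightarrow> real) \<Rightarrow> real \<Rightarrow> ennreal" where
  "Ireg k m d P1 P2 c = (\<integral>\<^sup>+x. ennreal (Gf k m d P1 P2 (c, x)) \<partial>lborel)"

definition Iter :: "real \<Rightarrow> real \<Rightarrow> (real \<times> real \<Rightarrow> real) \<Rightarrow> ennreal" where
  "Iter k m W = (\<integral>\<^sup>+x. \<integral>\<^sup>+y. ennreal (indicator (icell k m) (x, y) * (W (x, y))\<^sup>2) \<partial>lborel \<partial>lborel)"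

lemma Ireg_meas:
  assumes "good k m f P1 P2" "0 < d" "d < 1 / (2 * pi)"
  shows "Ireg k m d P1 P2 \<in> borel_measurable lborel"
proof -
  note [measurable] = Gf_meas[OF assms]
  show ?thesis unfolding Ireg_def[abs_def]
    by (rule lborel.borel_measurable_nn_integral_fst) (simp add: lborel_prod)
qed

lemma Ireg_int:
  assumes g: "good k m f P1 P2" and d: "0 < d" "d < 1 / (2 * pi)"
  shows "(\<integral>\<^sup>+c. Ireg k m d P1 P2 c \<partial>lborel) \<le> Iter k m (WW P1 P2)"
proof -
  note [measurable] = Gf_meas[OF g d]
  have "(\<integral>\<^sup>+c. Ireg k m d P1 P2 c \<partial>lborel)
      = (\<integral>\<^sup>+x. \<integral>\<^sup>+c. ennreal (Gf k m d P1 P2 (c, x)) \<partial>lborel \<partial>lborel)"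
    unfolding Ireg_def
  proof (rule lborel_pair.Fubini'[symmetric])
    have M: "(\<lambda>p. ennreal (Gf k m d P1 P2 p)) \<in> borel_measurable (lborel \<Otimes>\<^sub>M lborel)"
      by (simp add: lborel_prod)
    have eq: "(\<lambda>(x, y). ennreal (Gf k m d P1 P2 (x, y))) = (\<lambda>p. ennreal (Gf k m d P1 P2 p))"
      by (auto simp: fun_eq_iff)
    show "(\<lambda>(x, y). ennreal (Gf k m d P1 P2 (x, y))) \<in> borel_measurable (lborel \<Otimes>\<^sub>M lborel)"
      unfolding eq by (rule M)
  qed
  also have "\<dots> \<le> Iter k m (WW P1 P2)"
    unfolding Iter_def by (intro nn_integral_mono slice_bound[OF g d])
  finally show ?thesis .
qed


lemma inv_sin_integral:
  assumes c: "0 < c" "pi * c < 3/4"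
  shows "((\<lambda>x. 1 / sin (pi * (x - k))) has_integral (- (2 / pi) * ln (tan (pi * bb c / 2))))
           {k + bb c .. k + 1 - bb c}"
proof -
  note cf = cfacts[OF c]
  define F where "F x = ln (tan (pi * (x - k) / 2)) / pi" for x
  have deriv: "(F has_vector_derivative 1 / sin (pi * (x - k))) (at x within {k + bb c .. k + 1 - bb c})"
    if x: "x \<in> {k + bb c .. k + 1 - bb c}" for x
  proof -
    define y where "y = pi * (x - k) / 2"
    have y0: "0 < y" unfolding y_def using x cf by auto
    have "x - k < 1" using x cf by auto
    then have "pi * (x - k) < pi * 1" by (intro mult_strict_left_mono) auto
    then have y1: "y < pi / 2" unfolding y_def by simp
    have cy: "0 < cos y" using y0 y1 by (intro cos_gt_zero) auto
    have sy: "0 < sin y" using y0 y1 by (intro sin_gt_zero) auto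
    have ty: "0 < tan y" using cy sy by (simp add: tan_def)
    have "((\<lambda>x. ln (tan (pi * (x - k) / 2)) / pi) has_real_derivative
          inverse (tan y) * (inverse ((cos y)\<^sup>2) * (pi / 2)) / pi) (at x)"
      using cy ty unfolding y_def
      by (auto intro!: derivative_eq_intros DERIV_tan simp: power2_eq_square field_simps)
    moreover have "inverse (tan y) * (inverse ((cos y)\<^sup>2) * (pi / 2)) / pi = 1 / sin (pi * (x - k))"
    proof -
      have "sin (pi * (x - k)) = 2 * sin y * cos y" unfolding y_def using sin_double[of "pi * (x - k) / 2"] by simp
      then show ?thesis using cy sy by (simp add: tan_def field_simps power2_eq_square)
    qed
    ultimately have "(F has_real_derivative 1 / sin (pi * (x - k))) (at x)" unfolding F_def[abs_def] by simp
    then show ?thesis using has_real_derivative_iff_has_vector_derivative has_vector_derivative_at_within by blast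
  qed
  have "((\<lambda>x. 1 / sin (pi * (x - k))) has_integral (F (k + 1 - bb c) - F (k + bb c))) {k + bb c .. k + 1 - bb c}"
    by (rule fundamental_theorem_of_calculus) (use cf deriv in auto)
  moreover have "F (k + 1 - bb c) - F (k + bb c) = - (2 / pi) * ln (tan (pi * bb c / 2))"
  proof -
    have "pi * (k + 1 - bb c - k) / 2 = pi / 2 - pi * bb c / 2" by (simp add: field_simps)
    then have "tan (pi * (k + 1 - bb c - k) / 2) = tan (pi / 2 - pi * bb c / 2)" by (rule arg_cong)
    also have "\<dots> = inverse (tan (pi * bb c / 2))" by (rule tan_cot)
    finally have "tan (pi * (k + 1 - bb c - k) / 2) = inverse (tan (pi * bb c / 2))" .
    then have "F (k + 1 - bb c) = - ln (tan (pi * bb c / 2)) / pi" unfolding F_def by (simp add: ln_inverse)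
    moreover have "F (k + bb c) = ln (tan (pi * bb c / 2)) / pi" unfolding F_def by simp
    ultimately show ?thesis by (simp add: field_simps)
  qed
  ultimately show ?thesis by simp
qed

lemma tan_bb_ge:
  assumes c: "0 < c" "pi * c < 3/4"
  shows "sqrt (pi * c) / 2 \<le> tan (pi * bb c / 2)"
proof -
  note cf = cfacts[OF c]
  define y where "y = pi * bb c / 2"
  have y0: "0 < y" unfolding y_def using cf by auto
  have "pi * bb c < pi * (1/2)" using cf by (intro mult_strict_left_mono) auto
  then have y1: "y < pi / 2" unfolding y_def by simp
  have cy: "0 < cos y" using y0 y1 by (intro cos_gt_zero) auto
  have sy: "0 < sin y" using y0 y1 by (intro sin_gt_zero) auto
  have "sqrt (pi * c) = 2 * sin y * cos y" using cf(3) sin_double[of y] unfolding y_def by simp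
  moreover have "sin y * cos y \<le> sin y / cos y"
  proof -
    have "cos y * cos y \<le> 1" using cos_le_one[of y] cy by (metis mult_le_one less_eq_real_def)
    then have "sin y * (cos y * cos y) \<le> sin y" using sy by (simp add: mult_left_le)
    then show ?thesis using cy by (simp add: field_simps)
  qed
  ultimately show ?thesis unfolding y_def[symmetric] by (simp add: tan_def)
qed

lemma inv_sin_bound:
  assumes d: "0 < d" "d < 1 / (2 * pi)" and c: "d \<le> c" "c \<le> 3/2 * d"
  shows "- (2 / pi) * ln (tan (pi * bb c / 2)) \<le> ln (1 / d)"
proof -
  have c0: "0 < c" using d c by simp
  have "2 * pi * d < 1" using d(2) by (simp add: field_simps)
  moreover have "pi * c \<le> pi * (3/2 * d)" using c by (intro mult_left_mono) auto
  moreover have "pi * (3/2 * d) = 3/4 * (2 * pi * d)" by simp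
  ultimately have pc: "pi * c < 3/4" by linarith
  have t1: "sqrt (pi * c) / 2 \<le> tan (pi * bb c / 2)" by (rule tan_bb_ge[OF c0 pc])
  have "sqrt (pi * d) \<le> sqrt (pi * c)" using c by simp
  moreover have "2 * d \<le> sqrt (pi * d)"
  proof -
    have "(2 * d)\<^sup>2 \<le> pi * d"
    proof -
      have "2 * 2 * d \<le> 2 * pi * d" using d pi_ge_two by (intro mult_right_mono) auto
      then have "4 * d \<le> pi" using \<open>2 * pi * d < 1\<close> pi_ge_two by linarith
      then have "4 * d * d \<le> pi * d" using d by (intro mult_right_mono) auto
      then show ?thesis by (simp add: power2_eq_square)
    qed
    then show ?thesis using d by (metis real_le_rsqrt)
  qed
  ultimately have td: "d \<le> tan (pi * bb c / 2)" using t1 by linarith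
  then have "ln d \<le> ln (tan (pi * bb c / 2))" using d by simp
  then have "- ln (tan (pi * bb c / 2)) \<le> ln (1 / d)" using d by (simp add: ln_div)
  moreover have "0 \<le> ln (1 / d)"
  proof -
    have "2 * 2 * d \<le> 2 * pi * d" using d pi_ge_two by (intro mult_right_mono) auto
    then have "d < 1" using \<open>2 * pi * d < 1\<close> by linarith
    then show ?thesis using d by simp
  qed
  moreover have "2 / pi \<le> 1" using pi_ge_two by simp
  ultimately have "(2 / pi) * (- ln (tan (pi * bb c / 2))) \<le> 1 * ln (1 / d)"
  proof (cases "0 \<le> - ln (tan (pi * bb c / 2))")
    case True
    then show ?thesis using \<open>2 / pi \<le> 1\<close> \<open>- ln (tan (pi * bb c / 2)) \<le> ln (1 / d)\<close>
      by (intro mult_mono) auto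
  next
    case False
    then have "(2 / pi) * (- ln (tan (pi * bb c / 2))) \<le> 0"
      by (intro mult_nonneg_nonpos) auto
    then show ?thesis using \<open>0 \<le> ln (1 / d)\<close> by linarith
  qed
  then show ?thesis by simp
qed


lemma cR_in:
  assumes "d \<le> c" "c \<le> 3/2 * d" "x \<in> {k + bb c .. k + 1 - bb c}"
  shows "(c, x) \<in> Rg k m d"
  using assms unfolding Rg_def by auto

lemma arc_osc:
  fixes k m :: int
  assumes g: "good k m f P1 P2" and d: "0 < d" "d < 1 / (2 * pi)" and c: "d \<le> c" "c \<le> 3/2 * d"
    and x1: "x1 \<in> {real_of_int k + bb c .. real_of_int k + 1 - bb c}"
    and x2: "x2 \<in> {real_of_int k + bb c .. real_of_int k + 1 - bb c}"
  shows "ennreal ((f (gam k m c x1) - f (gam k m c x2))\<^sup>2) \<le> ennreal (2 * ln (1 / d)) * Ireg k m d P1 P2 c"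
proof -
  define S where "S = {real_of_int k + bb c .. real_of_int k + 1 - bb c}"
  have cS: "\<And>x. x \<in> S \<Longrightarrow> (c, x) \<in> Rg k m d" unfolding S_def using c by (intro cR_in) auto
  have af: "0 < c" "pi * c < 3/4" "bb c \<le> x - real_of_int k" "x - real_of_int k \<le> 1 - bb c" if "x \<in> S" for x
    using Rg_c[OF cS[OF that] d] by auto
  have c0: "0 < c" and pc: "pi * c < 3/4" using af[OF x1[folded S_def]] by auto
  note cf = cfacts[OF c0 pc]
  have ab: "real_of_int k + bb c \<le> real_of_int k + 1 - bb c" using cf by simp
  define D where "D = Dfun k m c P1 P2"
  define \<Gamma> where "\<Gamma> x = f (gam k m c x)" for x
  have gpos: "0 < gg c (x - real_of_int k)" if "x \<in> S" for x using arc_point_facts[OF af[OF that]] by blast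
  have gsin: "sin (pi * (x - real_of_int k)) / 2 \<le> gg c (x - real_of_int k)" if "x \<in> S" for x using arc_point_facts[OF af[OF that]] by blast
  have spos: "0 < sin (pi * (x - real_of_int k))" if "x \<in> S" for x using arc_point_facts[OF af[OF that]] by blast
  have ctau: "isCont (\<lambda>x. tau c (x - real_of_int k)) x" if "x \<in> S" for x
  proof -
    note ap = arc_point_facts[OF af[OF that]]
    have "isCont (\<lambda>p::real\<times>real. tau (fst p) (snd p - real_of_int k)) ((\<lambda>x. (c, x)) x)"
      by (rule isCont_tau2) (use ap in auto)
    then show ?thesis using isCont_o2[where f="\<lambda>x. (c, x)" and a=x and g="\<lambda>p::real\<times>real. tau (fst p) (snd p - real_of_int k)"] by simp
  qed
  have ctau': "isCont (\<lambda>x. tau' c (x - real_of_int k)) x" if "x \<in> S" for x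
  proof -
    note ap = arc_point_facts[OF af[OF that]]
    have "isCont (\<lambda>p::real\<times>real. tau' (fst p) (snd p - real_of_int k)) ((\<lambda>x. (c, x)) x)"
      by (rule isCont_tau'2) (use ap in auto)
    then show ?thesis using isCont_o2[where f="\<lambda>x. (c, x)" and a=x and g="\<lambda>p::real\<times>real. tau' (fst p) (snd p - real_of_int k)"] by simp
  qed
  have cgg: "isCont (\<lambda>x. gg c (x - real_of_int k)) x" for x
    using isCont_o2[where f="\<lambda>x. (c, x)" and a=x and g="\<lambda>p::real\<times>real. gg (fst p) (snd p - real_of_int k)", OF _ isCont_gg2] by simp
  have cgam: "isCont (gam k m c) x" if "x \<in> S" for x
    unfolding gam_def[abs_def] using ctau[OF that] by (intro continuous_intros) auto
  have cP: "isCont P1 (gam k m c x)" "isCont P2 (gam k m c x)" if "x \<in> S" for x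
    using g gam_in_icell[OF af[OF that]] open_icell[of k m] continuous_on_eq_continuous_at
    unfolding good_def by blast+
  have cWW: "isCont (\<lambda>x. WW P1 P2 (gam k m c x)) x" if "x \<in> S" for x
    using isCont_o2[OF cgam[OF that] isCont_WW[OF g gam_in_icell[OF af[OF that]]]] by simp
  have contD: "continuous_on S D"
    unfolding D_def Dfun_def[abs_def]
    by (intro continuous_at_imp_continuous_on ballI continuous_intros isCont_o2[OF cgam cP(1)]
        isCont_o2[OF cgam cP(2)] ctau') auto
  have ftc: "\<bar>\<Gamma> y2 - \<Gamma> y1\<bar> \<le> integral S (\<lambda>x. \<bar>D x\<bar>)" if y: "y1 \<in> S" "y2 \<in> S" "y1 \<le> y2" for y1 y2
  proof -
    have sub: "{y1..y2} \<subseteq> S" using y unfolding S_def by auto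
    have "(D has_integral (\<Gamma> y2 - \<Gamma> y1)) {y1..y2}"
    proof (rule fundamental_theorem_of_calculus[OF y(3)])
      fix x assume "x \<in> {y1..y2}"
        then have xS: "x \<in> S" using sub by auto
        have "(\<Gamma> has_real_derivative D x) (at x)"
          unfolding \<Gamma>_def[abs_def] D_def by (rule Gamma_deriv[OF g af[OF xS]])
        then show "(\<Gamma> has_vector_derivative D x) (at x within {y1..y2})"
          using has_real_derivative_iff_has_vector_derivative has_vector_derivative_at_within by blast
    qed
    then have "\<Gamma> y2 - \<Gamma> y1 = integral {y1..y2} D" by (simp add: integral_unique)
    moreover have "\<bar>integral {y1..y2} D\<bar> \<le> integral {y1..y2} (\<lambda>x. \<bar>D x\<bar>)"
      using Henstock_Kurzweil_Integration.integral_norm_bound_integral[of D "{y1..y2}" "\<lambda>x. \<bar>D x\<bar>"]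
        continuous_on_subset[OF contD sub]
      by (auto intro!: integrable_continuous_interval continuous_intros)
    moreover have "integral {y1..y2} (\<lambda>x. \<bar>D x\<bar>) \<le> integral S (\<lambda>x. \<bar>D x\<bar>)"
      using sub continuous_on_subset[OF contD sub] contD unfolding S_def
      by (intro integral_subset_le) (auto intro!: integrable_continuous_interval continuous_intros)
    ultimately show ?thesis by simp
  qed
  have osc: "\<bar>\<Gamma> x1 - \<Gamma> x2\<bar> \<le> integral S (\<lambda>x. \<bar>D x\<bar>)"
  proof (cases "x1 \<le> x2")
    case True
    then show ?thesis using ftc[of x1 x2] x1 x2 unfolding S_def by (simp add: abs_minus_commute)
  next
    case False
    then show ?thesis using ftc[of x2 x1] x1 x2 unfolding S_def by simp
  qed
  have intD: "(\<lambda>x. \<bar>D x\<bar>) integrable_on S"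
    unfolding S_def using contD unfolding S_def by (auto intro!: integrable_continuous_interval continuous_intros)
  have e1: "ennreal (integral S (\<lambda>x. \<bar>D x\<bar>)) = (\<integral>\<^sup>+x. ennreal \<bar>D x\<bar> * indicator S x \<partial>lborel)"
    using nn_integral_has_integral_lebesgue'[of S "\<lambda>x. \<bar>D x\<bar>" "integral S (\<lambda>x. \<bar>D x\<bar>)"] intD
    by (simp add: integrable_integral)
  define u where "u x = ennreal (indicator S x * (1 / sqrt (gg c (x - real_of_int k))))" for x
  define w where "w x = ennreal (indicator S x * (\<bar>WW P1 P2 (gam k m c x)\<bar> / sqrt (gg c (x - real_of_int k))))" for x
  have Dform: "\<bar>D x\<bar> = \<bar>WW P1 P2 (gam k m c x)\<bar> / gg c (x - real_of_int k)" if "x \<in> S" for x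
  proof -
    have "WW P1 P2 (gam k m c x) = - (cos (pi * k) * cos (pi * m)) * gg c (x - real_of_int k) * D x"
      unfolding D_def by (rule WW_gam[OF af[OF that]])
    then have "\<bar>WW P1 P2 (gam k m c x)\<bar> = gg c (x - real_of_int k) * \<bar>D x\<bar>"
      using gpos[OF that] by (simp add: abs_mult cos_int_pi_abs)
    then show ?thesis using gpos[OF that] by simp
  qed
  have uw: "ennreal \<bar>D x\<bar> * indicator S x = u x * w x" for x
  proof (cases "x \<in> S")
    case True
    have sq: "sqrt (gg c (x - real_of_int k)) * sqrt (gg c (x - real_of_int k)) = gg c (x - real_of_int k)"
      using gpos[OF True] by simp
    have "\<bar>D x\<bar> = (1 / sqrt (gg c (x - real_of_int k))) * (\<bar>WW P1 P2 (gam k m c x)\<bar> / sqrt (gg c (x - real_of_int k)))"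
      unfolding Dform[OF True] using sq by (simp add: field_simps)
    then show ?thesis unfolding u_def w_def using True gpos[OF True]
      by (simp add: ennreal_mult[symmetric])
  qed (simp add: u_def w_def)
  have cinvs: "continuous_on S (\<lambda>x. 1 / sqrt (gg c (x - real_of_int k)))"
    using gpos by (intro continuous_at_imp_continuous_on ballI continuous_intros cgg) (metis gpos less_irrefl real_sqrt_eq_zero_cancel_iff)
  have cw: "continuous_on S (\<lambda>x. \<bar>WW P1 P2 (gam k m c x)\<bar> / sqrt (gg c (x - real_of_int k)))"
    using gpos by (intro continuous_at_imp_continuous_on ballI continuous_intros cgg cWW) (metis gpos less_irrefl real_sqrt_eq_zero_cancel_iff)+
  have bS: "S \<in> sets borel" unfolding S_def by simp
  have mu: "u \<in> borel_measurable lborel"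
  proof -
    have "(\<lambda>x. indicator S x *\<^sub>R (1 / sqrt (gg c (x - real_of_int k)))) \<in> borel_measurable borel"
      by (rule borel_measurable_continuous_on_indicator[OF bS cinvs])
    then show ?thesis unfolding u_def[abs_def] by simp
  qed
  have mw: "w \<in> borel_measurable lborel"
  proof -
    have "(\<lambda>x. indicator S x *\<^sub>R (\<bar>WW P1 P2 (gam k m c x)\<bar> / sqrt (gg c (x - real_of_int k)))) \<in> borel_measurable borel"
      by (rule borel_measurable_continuous_on_indicator[OF bS cw])
    then show ?thesis unfolding w_def[abs_def] by simp
  qed
  have CS: "(\<integral>\<^sup>+x. u x * w x \<partial>lborel)\<^sup>2 \<le> (\<integral>\<^sup>+x. u x ^ 2 \<partial>lborel) * (\<integral>\<^sup>+x. w x ^ 2 \<partial>lborel)"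
    by (rule Cauchy_Schwarz_nn_integral[OF mu mw])
  have w2: "w x ^ 2 = ennreal (Gf k m d P1 P2 (c, x))" for x
  proof (cases "x \<in> S")
    case True
    have "(\<bar>WW P1 P2 (gam k m c x)\<bar> / sqrt (gg c (x - real_of_int k)))\<^sup>2 = Fint k m P1 P2 (c, x)"
      unfolding Fint_def using gpos[OF True] by (simp add: power_divide)
    then show ?thesis unfolding w_def Gf_def using True cS[OF True] gpos[OF True]
      by (simp add: ennreal_power)
  next
    case False
    have "(c, x) \<notin> Rg k m d"
    proof
      assume "(c, x) \<in> Rg k m d"
      then have "x \<in> S" unfolding Rg_def S_def by auto
      then show False using False by simp
    qed
    then show ?thesis unfolding w_def Gf_def using False by simp
  qed
  have u2: "u x ^ 2 \<le> ennreal (indicator S x * (2 / sin (pi * (x - real_of_int k))))" for x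
  proof (cases "x \<in> S")
    case True
    have "(1 / sqrt (gg c (x - real_of_int k)))\<^sup>2 = 1 / gg c (x - real_of_int k)"
      using gpos[OF True] by (simp add: power_divide)
    also have "\<dots> \<le> 2 / sin (pi * (x - real_of_int k))"
      using gsin[OF True] spos[OF True] gpos[OF True] by (simp add: field_simps)
    finally show ?thesis unfolding u_def using True gpos[OF True]
      by (simp add: ennreal_power ennreal_leI)
  qed (simp add: u_def)
  have hi: "((\<lambda>x. 2 / sin (pi * (x - real_of_int k))) has_integral (2 * (- (2 / pi) * ln (tan (pi * bb c / 2))))) S"
    unfolding S_def using has_integral_mult_right[OF inv_sin_integral[OF c0 pc, of "real_of_int k"], of 2]
    by simp
  have "(\<integral>\<^sup>+x. u x ^ 2 \<partial>lborel) \<le> (\<integral>\<^sup>+x. ennreal (indicator S x * (2 / sin (pi * (x - real_of_int k)))) \<partial>lborel)"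
    by (intro nn_integral_mono u2)
  also have "\<dots> = (\<integral>\<^sup>+x. ennreal (2 / sin (pi * (x - real_of_int k))) * indicator S x \<partial>lborel)"
    by (intro nn_integral_cong) (auto simp: indicator_def)
  also have "\<dots> = ennreal (2 * (- (2 / pi) * ln (tan (pi * bb c / 2))))"
    by (rule nn_integral_has_integral_lebesgue'[OF _ hi]) (simp, metis spos less_imp_le)
  also have "\<dots> \<le> ennreal (2 * ln (1 / d))"
    using inv_sin_bound[OF d c] by (intro ennreal_leI) simp
  finally have U: "(\<integral>\<^sup>+x. u x ^ 2 \<partial>lborel) \<le> ennreal (2 * ln (1 / d))" .
  have W: "(\<integral>\<^sup>+x. w x ^ 2 \<partial>lborel) = Ireg k m d P1 P2 c"
    unfolding Ireg_def w2 ..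
  have "ennreal ((\<Gamma> x1 - \<Gamma> x2)\<^sup>2) = (ennreal \<bar>\<Gamma> x1 - \<Gamma> x2\<bar>)\<^sup>2"
    by (simp add: ennreal_power)
  also have "\<dots> \<le> (ennreal (integral S (\<lambda>x. \<bar>D x\<bar>)))\<^sup>2"
    using osc by (intro power_mono ennreal_leI) auto
  also have "\<dots> = (\<integral>\<^sup>+x. u x * w x \<partial>lborel)\<^sup>2" unfolding e1 uw ..
  also have "\<dots> \<le> (\<integral>\<^sup>+x. u x ^ 2 \<partial>lborel) * (\<integral>\<^sup>+x. w x ^ 2 \<partial>lborel)" by (rule CS)
  also have "\<dots> \<le> ennreal (2 * ln (1 / d)) * Ireg k m d P1 P2 c"
    unfolding W using U by (intro mult_right_mono) auto
  finally show ?thesis unfolding \<Gamma>_def .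
qed


definition rfl :: "real \<Rightarrow> real \<times> real \<Rightarrow> real \<times> real" where
  "rfl m p = (fst p, 2 * m + 1 - snd p)"

lemma rfl_icell: "p \<in> icell k m \<longleftrightarrow> rfl m p \<in> icell k m"
  unfolding rfl_def icell_def by (cases p) auto

lemma rfl_rfl[simp]: "rfl m (rfl m p) = p"
  unfolding rfl_def by simp

lemma good_rfl:
  assumes g: "good k m f P1 P2"
  shows "good k m (\<lambda>p. f (rfl m p)) (\<lambda>p. P1 (rfl m p)) (\<lambda>p. - P2 (rfl m p))"
  unfolding good_def
proof (intro conjI ballI)
  fix p assume p: "p \<in> icell k m"
  have "(rfl m has_derivative (\<lambda>h. (fst h, 0 - snd h))) (at p)"
    unfolding rfl_def[abs_def]
    by (intro has_derivative_Pair has_derivative_fst has_derivative_snd has_derivative_diff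
        has_derivative_const has_derivative_ident)
  then have dr: "(rfl m has_derivative (\<lambda>h. (fst h, - snd h))) (at p)" by simp
  have df: "(f has_derivative (\<lambda>h. P1 (rfl m p) * fst h + P2 (rfl m p) * snd h)) (at (rfl m p))"
    using g p rfl_icell unfolding good_def by blast
  have "((\<lambda>p. f (rfl m p)) has_derivative (\<lambda>h. P1 (rfl m p) * fst (fst h, - snd h) + P2 (rfl m p) * snd (fst h, - snd h))) (at p)"
    by (rule has_derivative_compose[OF dr df])
  then show "((\<lambda>p. f (rfl m p)) has_derivative (\<lambda>h. P1 (rfl m p) * fst h + - P2 (rfl m p) * snd h)) (at p)"
    by simp
next
  have cr: "continuous_on (icell k m) (rfl m)" unfolding rfl_def[abs_def] by (intro continuous_intros)
  have im: "rfl m ` icell k m \<subseteq> icell k m" using rfl_icell by blast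
  show "continuous_on (icell k m) (\<lambda>p. P1 (rfl m p))"
    using g unfolding good_def by (intro continuous_on_compose2[OF _ cr im]) auto
  show "continuous_on (icell k m) (\<lambda>p. - P2 (rfl m p))"
    using g unfolding good_def by (intro continuous_intros continuous_on_compose2[OF _ cr im]) auto
qed

lemma cos_odd_pi: "cos (pi * (2 * real_of_int m + 1)) = -1"
proof -
  have "pi * (2 * real_of_int m + 1) = 2 * (pi * real_of_int m) + pi" by (simp add: algebra_simps)
  then have "cos (pi * (2 * real_of_int m + 1)) = - cos (2 * (pi * real_of_int m))" by (simp add: cos_add)
  also have "\<dots> = - ((cos (pi * real_of_int m))\<^sup>2 - (sin (pi * real_of_int m))\<^sup>2)" by (simp add: cos_double)
  also have "\<dots> = -1" using cos_int_pi_sq[of m] sin_int_pi[of m] by simp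
  finally show ?thesis .
qed

lemma sin_odd_pi: "sin (pi * (2 * real_of_int m + 1)) = 0"
  using sin_int_pi[of "2 * m + 1"] by simp

lemma WW_rfl:
  fixes m :: int
  shows "WW (\<lambda>p. P1 (rfl m p)) (\<lambda>p. - P2 (rfl m p)) p = - WW P1 P2 (rfl m p)"
proof -
  have e: "pi * (2 * real_of_int m + 1 - y) = pi * (2 * real_of_int m + 1) - pi * y" for y
    by (simp add: algebra_simps)
  have s: "sin (pi * (2 * real_of_int m + 1 - y)) = sin (pi * y)" for y
    unfolding e by (simp only: sin_diff cos_odd_pi sin_odd_pi)
  have c: "cos (pi * (2 * real_of_int m + 1 - y)) = - cos (pi * y)" for y
    unfolding e by (simp only: cos_diff cos_odd_pi sin_odd_pi)
  show ?thesis unfolding WW_def H1_def H2_def rfl_def by (simp add: s c)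
qed

definition swp :: "real \<times> real \<Rightarrow> real \<times> real" where
  "swp p = (snd p, fst p)"

lemma swp_icell: "p \<in> icell m k \<longleftrightarrow> swp p \<in> icell k m"
  unfolding swp_def icell_def by (cases p) auto

lemma swp_swp[simp]: "swp (swp p) = p"
  unfolding swp_def by simp

lemma good_swp:
  assumes g: "good k m f P1 P2"
  shows "good m k (\<lambda>p. f (swp p)) (\<lambda>p. P2 (swp p)) (\<lambda>p. P1 (swp p))"
  unfolding good_def
proof (intro conjI ballI)
  fix p assume p: "p \<in> icell m k"
  have dr: "(swp has_derivative (\<lambda>h. (snd h, fst h))) (at p)"
    unfolding swp_def[abs_def]
    by (intro has_derivative_Pair has_derivative_fst has_derivative_snd has_derivative_ident)
  have df: "(f has_derivative (\<lambda>h. P1 (swp p) * fst h + P2 (swp p) * snd h)) (at (swp p))"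
    using g p swp_icell unfolding good_def by blast
  have "((\<lambda>p. f (swp p)) has_derivative (\<lambda>h. P1 (swp p) * fst (snd h, fst h) + P2 (swp p) * snd (snd h, fst h))) (at p)"
    by (rule has_derivative_compose[OF dr df])
  moreover have "(\<lambda>h. P1 (swp p) * fst (snd h, fst h) + P2 (swp p) * snd (snd h, fst h)) = (\<lambda>h. P2 (swp p) * fst h + P1 (swp p) * snd h)"
    by (auto simp: fun_eq_iff)
  ultimately show "((\<lambda>p. f (swp p)) has_derivative (\<lambda>h. P2 (swp p) * fst h + P1 (swp p) * snd h)) (at p)"
    by simp
next
  have cr: "continuous_on (icell m k) swp" unfolding swp_def[abs_def] by (intro continuous_intros)
  have im: "swp ` icell m k \<subseteq> icell k m" using swp_icell by blast
  show "continuous_on (icell m k) (\<lambda>p. P2 (swp p))"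
    using g unfolding good_def by (intro continuous_on_compose2[OF _ cr im]) auto
  show "continuous_on (icell m k) (\<lambda>p. P1 (swp p))"
    using g unfolding good_def by (intro continuous_on_compose2[OF _ cr im]) auto
qed

lemma WW_swp: "WW (\<lambda>p. P2 (swp p)) (\<lambda>p. P1 (swp p)) p = - WW P1 P2 (swp p)"
  unfolding WW_def H1_def H2_def swp_def by (simp add: algebra_simps)

lemma WW_meas:
  assumes g: "good k m f P1 P2"
  shows "(\<lambda>p. indicator (icell k m) p * (WW P1 P2 p)\<^sup>2) \<in> borel_measurable borel"
proof -
  have "continuous_on (icell k m) (\<lambda>p. (WW P1 P2 p)\<^sup>2)"
    using isCont_WW[OF g] by (intro continuous_at_imp_continuous_on ballI continuous_intros) auto
  then have "(\<lambda>p. indicator (icell k m) p *\<^sub>R (WW P1 P2 p)\<^sup>2) \<in> borel_measurable borel"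
    by (intro borel_measurable_continuous_on_indicator borel_open open_icell)
  then show ?thesis by simp
qed


lemma Iter_rfl:
  fixes m :: int
  assumes g: "good k m f P1 P2"
  shows "Iter k m (WW (\<lambda>p. P1 (rfl m p)) (\<lambda>p. - P2 (rfl m p))) = Iter k m (WW P1 P2)"
  unfolding Iter_def
proof (rule nn_integral_cong)
  fix x :: real assume "x \<in> space lborel"
  define G where "G p = indicator (icell k m) p * (WW P1 P2 p)\<^sup>2" for p
  have [measurable]: "G \<in> borel_measurable borel" unfolding G_def[abs_def] by (rule WW_meas[OF g])
  have h: "(\<lambda>y. ennreal (G (x, y))) \<in> borel_measurable borel" by measurable
  have "(\<integral>\<^sup>+y. ennreal (indicator (icell k m) (x, y) * (WW (\<lambda>p. P1 (rfl m p)) (\<lambda>p. - P2 (rfl m p)) (x, y))\<^sup>2) \<partial>lborel)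
      = (\<integral>\<^sup>+y. ennreal (G (x, (2 * m + 1) + (-1) * y)) \<partial>lborel)"
  proof (rule nn_integral_cong)
    fix y :: real assume "y \<in> space lborel"
    have "rfl m (x, y) = (x, (2 * m + 1) + (-1) * y)" unfolding rfl_def by simp
    moreover have "indicator (icell k m) (x, y) = (indicator (icell k m) (rfl m (x, y)) :: real)"
      using rfl_icell[of "(x, y)" k m] by (simp add: indicator_def)
    ultimately show "ennreal (indicator (icell k m) (x, y) * (WW (\<lambda>p. P1 (rfl m p)) (\<lambda>p. - P2 (rfl m p)) (x, y))\<^sup>2)
        = ennreal (G (x, (2 * m + 1) + (-1) * y))"
      unfolding G_def WW_rfl by simp
  qed
  also have "\<dots> = (\<integral>\<^sup>+y. ennreal (G (x, y)) \<partial>lborel)"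
    using nn_integral_real_affine[OF h, of "-1" "2 * m + 1"] by simp
  finally show "(\<integral>\<^sup>+y. ennreal (indicator (icell k m) (x, y) * (WW (\<lambda>p. P1 (rfl m p)) (\<lambda>p. - P2 (rfl m p)) (x, y))\<^sup>2) \<partial>lborel)
      = (\<integral>\<^sup>+y. ennreal (indicator (icell k m) (x, y) * (WW P1 P2 (x, y))\<^sup>2) \<partial>lborel)"
    unfolding G_def .
qed

lemma Iter_swp:
  assumes g: "good k m f P1 P2"
  shows "Iter m k (WW (\<lambda>p. P2 (swp p)) (\<lambda>p. P1 (swp p))) = Iter k m (WW P1 P2)"
proof -
  define G where "G p = indicator (icell k m) p * (WW P1 P2 p)\<^sup>2" for p
  have [measurable]: "G \<in> borel_measurable borel" unfolding G_def[abs_def] by (rule WW_meas[OF g])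
  have "Iter m k (WW (\<lambda>p. P2 (swp p)) (\<lambda>p. P1 (swp p))) = (\<integral>\<^sup>+x. \<integral>\<^sup>+y. ennreal (G (y, x)) \<partial>lborel \<partial>lborel)"
    unfolding Iter_def
  proof (intro nn_integral_cong)
    fix x y :: real assume "x \<in> space lborel" "y \<in> space lborel"
    have "indicator (icell m k) (x, y) = (indicator (icell k m) (y, x) :: real)"
      using swp_icell[of "(x, y)" m k] by (simp add: indicator_def swp_def)
    then show "ennreal (indicator (icell m k) (x, y) * (WW (\<lambda>p. P2 (swp p)) (\<lambda>p. P1 (swp p)) (x, y))\<^sup>2) = ennreal (G (y, x))"
      unfolding G_def WW_swp by (simp add: swp_def)
  qed
  also have "\<dots> = (\<integral>\<^sup>+y. \<integral>\<^sup>+x. ennreal (G (y, x)) \<partial>lborel \<partial>lborel)"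
  proof (rule lborel_pair.Fubini'[symmetric])
    have [measurable]: "G \<in> borel_measurable (lborel \<Otimes>\<^sub>M lborel)" by (simp add: lborel_prod)
    have M: "(\<lambda>p. ennreal (G (snd p, fst p))) \<in> borel_measurable (lborel \<Otimes>\<^sub>M lborel)"
      by measurable
    have eq: "(\<lambda>(x, y). ennreal (G (y, x))) = (\<lambda>p. ennreal (G (snd p, fst p)))"
      by (auto simp: fun_eq_iff)
    show "(\<lambda>(x, y). ennreal (G (y, x))) \<in> borel_measurable (lborel \<Otimes>\<^sub>M lborel)"
      unfolding eq by (rule M)
  qed
  also have "\<dots> = Iter k m (WW P1 P2)" unfolding Iter_def G_def ..
  finally show ?thesis .
qed


lemma avg_exists:
  fixes J :: "real \<Rightarrow> ennreal"
  assumes mJ: "J \<in> borel_measurable lborel" and ab: "a < b" and K: "(\<integral>\<^sup>+c. J c \<partial>lborel) \<le> K"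
  shows "\<exists>c\<in>{a<..<b}. J c \<le> ennreal (2 / (b - a)) * K"
proof (rule ccontr)
  assume "\<not> ?thesis"
  then have gt: "\<And>c. c \<in> {a<..<b} \<Longrightarrow> ennreal (2 / (b - a)) * K < J c" by (simp add: not_le)
  have c0: "0 < 2 / (b - a)" using ab by simp
  have mI: "emeasure lborel {a<..<b} = ennreal (b - a)" using ab by simp
  show False
  proof (cases "K = top")
    case True
    then have "ennreal (2 / (b - a)) * K = top" using c0 by (simp add: ennreal_mult_top)
    then show False using gt[of "(a + b) / 2"] ab by simp
  next
    case False
    have "(\<integral>\<^sup>+c. (ennreal (2 / (b - a)) * K) * indicator {a<..<b} c \<partial>lborel) \<le> (\<integral>\<^sup>+c. J c \<partial>lborel)"
      using gt by (intro nn_integral_mono) (auto simp: indicator_def less_imp_le)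
    moreover have "(\<integral>\<^sup>+c. (ennreal (2 / (b - a)) * K) * indicator {a<..<b} c \<partial>lborel) = 2 * K"
    proof -
      have "(\<integral>\<^sup>+c. (ennreal (2 / (b - a)) * K) * indicator {a<..<b} c \<partial>lborel)
          = (ennreal (2 / (b - a)) * K) * emeasure lborel {a<..<b}"
        by (rule nn_integral_cmult_indicator) simp
      also have "\<dots> = ennreal (2 / (b - a)) * ennreal (b - a) * K" unfolding mI by (simp add: ac_simps)
      also have "ennreal (2 / (b - a)) * ennreal (b - a) = 2"
      proof -
        have "2 / (b - a) * (b - a) = 2" using ab by (simp add: field_simps)
        moreover have "ennreal (2 / (b - a) * (b - a)) = ennreal (2 / (b - a)) * ennreal (b - a)"
          using ab by (intro ennreal_mult') simp
        ultimately show ?thesis by simp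
      qed
      finally show ?thesis .
    qed
    ultimately have "2 * K \<le> K" using K by simp
    then have K0: "K = 0"
    proof -
      assume a2: "2 * K \<le> K"
      obtain r where r: "K = ennreal r" "0 \<le> r" using False by (cases K rule: ennreal_cases) auto
      have "ennreal (2 * r) \<le> ennreal r" using a2 r by (simp add: ennreal_mult')
      then have "2 * r \<le> r" using r by (simp add: ennreal_le_iff)
      then have "r = 0" using r by simp
      then show ?thesis using r by simp
    qed
    then have "(\<integral>\<^sup>+c. J c \<partial>lborel) = 0" using K by simp
    then have "AE c in lborel. J c = 0" using nn_integral_0_iff_AE[OF mJ] by simp
    moreover have "\<And>c. J c = 0 \<Longrightarrow> c \<notin> {a<..<b}" using gt K0 by fastforce
    ultimately have "AE c in lborel. c \<notin> {a<..<b}" by (auto elim: AE_mp)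
    then have "emeasure lborel {a<..<b} = 0" using AE_iff_measurable[of "{a<..<b}" lborel "\<lambda>c. c \<notin> {a<..<b}"] by (auto simp: greaterThanLessThan_def greaterThan_def lessThan_def)
    then show False using mI ab by simp
  qed
qed


lemma tau_of_sin:
  assumes "0 \<le> t" "t \<le> 1/2" "0 < sin (pi * s)" "sin (pi * s) * sin (pi * t) = pi * c"
  shows "tau c s = t"
proof -
  have "pi * c / sin (pi * s) = sin (pi * t)" using assms(3,4) by (simp add: field_simps)
  then have "tau c s = arcsin (sin (pi * t)) / pi" unfolding tau_def by simp
  also have "\<dots> = t" using pi_half_range[OF assms(1,2)] pi_gt_zero by (subst arcsin_sin) (linarith, linarith, simp)
  finally show ?thesis .
qed

lemma classify_aux:
  assumes c: "0 < c" "pi * c < 3/4" and s: "0 \<le> s" "s \<le> 1" and t: "0 \<le> t" "t \<le> 1"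
    and e: "sin (pi * s) * sin (pi * t) = pi * c"
    and le: "min t (1 - t) \<le> min s (1 - s)"
  shows "bb c \<le> s \<and> s \<le> 1 - bb c \<and> (t = tau c s \<or> t = 1 - tau c s)"
proof -
  define s' where "s' = min s (1 - s)"
  define t' where "t' = min t (1 - t)"
  have ss: "sin (pi * s) = sin (pi * s')" unfolding s'_def by (simp add: min_def sin_pi_refl)
  have tt: "sin (pi * t) = sin (pi * t')" unfolding t'_def by (simp add: min_def sin_pi_refl)
  have s'r: "0 \<le> s'" "s' \<le> 1/2" unfolding s'_def using s by (auto simp: min_def)
  have t'r: "0 \<le> t'" "t' \<le> 1/2" unfolding t'_def using t by (auto simp: min_def)
  have "sin (pi * t') \<le> sin (pi * s')" using t'r s'r le unfolding s'_def[symmetric] t'_def[symmetric]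
    by (intro sin_le_mono_pi) auto
  moreover have st0: "0 \<le> sin (pi * t')" using pi_half_range[OF t'r] pi_gt_zero by (intro sin_ge_zero) linarith+
  moreover have ss0: "0 \<le> sin (pi * s')" using pi_half_range[OF s'r] pi_gt_zero by (intro sin_ge_zero) linarith+
  ultimately have "sin (pi * s') * sin (pi * t') \<le> sin (pi * s') * sin (pi * s')" by (intro mult_left_mono)
  then have "pi * c \<le> (sin (pi * s))\<^sup>2" using e ss tt by (simp add: power2_eq_square)
  then have "sqrt (pi * c) \<le> sqrt ((sin (pi * s))\<^sup>2)" by (rule real_sqrt_le_mono)
  then have sg: "sqrt (pi * c) \<le> sin (pi * s)" using ss ss0 by simp
  have ab: "bb c \<le> s \<and> s \<le> 1 - bb c" by (rule on_arc_of_sin_ge[OF c s sg])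
  have sp: "0 < sin (pi * s)" using sg cfacts[OF c] by linarith
  have "tau c s = t'" by (rule tau_of_sin[OF t'r sp]) (use e tt in simp)
  then have "t = tau c s \<or> t = 1 - tau c s" unfolding t'_def by (auto simp: min_def)
  then show ?thesis using ab by simp
qed

lemma H_shift: "H (real_of_int k + s, real_of_int m + t) = cos (pi * k) * cos (pi * m) * (sin (pi * s) * sin (pi * t)) / pi"
  unfolding H_def by (simp add: sin_shift)


lemma osc_real:
  assumes "ennreal (X\<^sup>2) \<le> ennreal T * I" "I \<noteq> top" "0 \<le> T"
  shows "\<bar>X\<bar> \<le> sqrt (T * enn2real I)"
proof -
  obtain r where r: "I = ennreal r" "0 \<le> r" using assms(2) by (cases I rule: ennreal_cases) auto
  have "ennreal (X\<^sup>2) \<le> ennreal (T * r)" using assms(1) r assms(3) by (simp add: ennreal_mult)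
  then have "X\<^sup>2 \<le> T * r" using r assms(3) by (simp add: ennreal_le_iff)
  then have "sqrt (X\<^sup>2) \<le> sqrt (T * r)" by (rule real_sqrt_le_mono)
  then show ?thesis using r by simp
qed

lemma sq4: "((a::real) + b + c + d)\<^sup>2 \<le> 4 * (a\<^sup>2 + b\<^sup>2 + c\<^sup>2 + d\<^sup>2)"
proof -
  have "0 \<le> (a - b)\<^sup>2 + (a - c)\<^sup>2 + (a - d)\<^sup>2 + (b - c)\<^sup>2 + (b - d)\<^sup>2 + (c - d)\<^sup>2" by simp
  then show ?thesis by (simp add: power2_eq_square algebra_simps)
qed

lemma tau_bb:
  assumes c: "0 < c" "pi * c < 3/4"
  shows "tau c (bb c) = bb c" "tau c (1 - bb c) = bb c"
proof -
  note cf = cfacts[OF c]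
  have e: "sin (pi * bb c) * sin (pi * bb c) = pi * c" using cf c by simp
  show "tau c (bb c) = bb c" by (rule tau_of_sin) (use cf e in auto)
  show "tau c (1 - bb c) = bb c" by (rule tau_of_sin) (use cf e sin_pi_refl in auto)
qed



lemma four_ennreal: "(x::ennreal) + x + x + x = 4 * x"
proof -
  have "(4::ennreal) = 1 + 1 + 1 + 1" by simp
  then show ?thesis by (simp only: distrib_right mult_1)
qed

lemma core:
  fixes K M :: int and f P1 P2 :: "real \<times> real \<Rightarrow> real"
  assumes g0: "good K M f P1 P2" and d: "0 < \<delta>" "\<delta> < 1 / (2 * pi)"
  shows "\<exists>h. h \<noteq> 0 \<and> \<delta> < \<bar>h\<bar> \<and> \<bar>h\<bar> < 2 * \<delta> \<and>
     {x \<in> {real_of_int K..real_of_int K + 1} \<times> {real_of_int M..real_of_int M + 1}. H x = h} \<noteq> {} \<and>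
     (\<forall>x1\<in>{x \<in> {real_of_int K..real_of_int K + 1} \<times> {real_of_int M..real_of_int M + 1}. H x = h}.
      \<forall>x2\<in>{x \<in> {real_of_int K..real_of_int K + 1} \<times> {real_of_int M..real_of_int M + 1}. H x = h}.
        ennreal (\<bar>f x1 - f x2\<bar>^2) \<le> ennreal (512 * (1 / \<delta>) * ln (1 / \<delta>)) * Iter K M (WW P1 P2))"
proof -
  note g1 = good_rfl[OF g0]
  note g2 = good_swp[OF g0]
  note g3 = good_rfl[OF g2]
  define J where "J c = Ireg K M \<delta> P1 P2 c
      + Ireg K M \<delta> (\<lambda>p. P1 (rfl M p)) (\<lambda>p. - P2 (rfl M p)) c
      + Ireg M K \<delta> (\<lambda>p. P2 (swp p)) (\<lambda>p. P1 (swp p)) c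
      + Ireg M K \<delta> (\<lambda>p. P2 (swp (rfl K p))) (\<lambda>p. - P1 (swp (rfl K p))) c" for c
  note m0 = Ireg_meas[OF g0 d] and m1 = Ireg_meas[OF g1 d] and m2 = Ireg_meas[OF g2 d] and m3 = Ireg_meas[OF g3 d]
  have mJ: "J \<in> borel_measurable lborel" unfolding J_def[abs_def] using m0 m1 m2 m3 by measurable
  have intJ: "(\<integral>\<^sup>+c. J c \<partial>lborel) \<le> 4 * Iter K M (WW P1 P2)"
  proof -
    have "(\<integral>\<^sup>+c. J c \<partial>lborel) = (\<integral>\<^sup>+c. Ireg K M \<delta> P1 P2 c \<partial>lborel)
      + (\<integral>\<^sup>+c. Ireg K M \<delta> (\<lambda>p. P1 (rfl M p)) (\<lambda>p. - P2 (rfl M p)) c \<partial>lborel)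
      + (\<integral>\<^sup>+c. Ireg M K \<delta> (\<lambda>p. P2 (swp p)) (\<lambda>p. P1 (swp p)) c \<partial>lborel)
      + (\<integral>\<^sup>+c. Ireg M K \<delta> (\<lambda>p. P2 (swp (rfl K p))) (\<lambda>p. - P1 (swp (rfl K p))) c \<partial>lborel)"
      unfolding J_def using m0 m1 m2 m3 by (simp add: nn_integral_add)
    also have "\<dots> \<le> Iter K M (WW P1 P2) + Iter K M (WW (\<lambda>p. P1 (rfl M p)) (\<lambda>p. - P2 (rfl M p)))
        + Iter M K (WW (\<lambda>p. P2 (swp p)) (\<lambda>p. P1 (swp p)))
        + Iter M K (WW (\<lambda>p. P2 (swp (rfl K p))) (\<lambda>p. - P1 (swp (rfl K p))))"
      by (intro add_mono Ireg_int[OF g0 d] Ireg_int[OF g1 d] Ireg_int[OF g2 d] Ireg_int[OF g3 d])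
    also have "\<dots> = 4 * Iter K M (WW P1 P2)"
      using Iter_rfl[OF g0] Iter_swp[OF g0] Iter_rfl[OF g2] by (simp add: four_ennreal)
    finally show ?thesis .
  qed
  have "\<delta> < 3/2 * \<delta>" using d by simp
  from avg_exists[OF mJ this, of "4 * Iter K M (WW P1 P2)"] intJ
  obtain c where c: "\<delta> < c" "c < 3/2 * \<delta>" and Jc: "J c \<le> ennreal (2 / (3/2 * \<delta> - \<delta>)) * (4 * Iter K M (WW P1 P2))"
    by auto
  have cle: "\<delta> \<le> c" "c \<le> 3/2 * \<delta>" using c by auto
  have c0: "0 < c" using c d by simp
  have "2 * pi * \<delta> < 1" using d(2) by (simp add: field_simps)
  moreover have "pi * c \<le> pi * (3/2 * \<delta>)" using c by (intro mult_left_mono) auto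
  moreover have "pi * (3/2 * \<delta>) = 3/4 * (2 * pi * \<delta>)" by simp
  ultimately have pc: "pi * c < 3/4" by linarith
  note cf = cfacts[OF c0 pc]
  note tb = tau_bb[OF c0 pc]
  define b where "b = bb c"
  define \<sigma> where "\<sigma> = cos (pi * K) * cos (pi * M)"
  have s1: "\<bar>\<sigma>\<bar> = 1" unfolding \<sigma>_def by (simp add: abs_mult cos_int_pi_abs)
  define h where "h = \<sigma> * c"
  have habs: "\<bar>h\<bar> = c" unfolding h_def using s1 c0 by (simp add: abs_mult)
  define Q where "Q = {real_of_int K..real_of_int K + 1} \<times> {real_of_int M..real_of_int M + 1}"
  define p0 where "p0 = (real_of_int K + b, real_of_int M + b)"
  have Hp0: "H p0 = h"
  proof -
    have "H p0 = \<sigma> * (sin (pi * b) * sin (pi * b)) / pi" unfolding p0_def \<sigma>_def by (rule H_shift)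
    also have "sin (pi * b) * sin (pi * b) = pi * c" unfolding b_def using cf c0 by simp
    finally show ?thesis unfolding h_def by simp
  qed
  have p0Q: "p0 \<in> Q" unfolding p0_def Q_def b_def using cf by auto
  define SK where "SK = {real_of_int K + bb c .. real_of_int K + 1 - bb c}"
  define SM where "SM = {real_of_int M + bb c .. real_of_int M + 1 - bb c}"
  have bK: "real_of_int K + b \<in> SK" "real_of_int K + 1 - b \<in> SK" unfolding SK_def b_def using cf by auto
  have bM: "real_of_int M + b \<in> SM" "real_of_int M + 1 - b \<in> SM" unfolding SM_def b_def using cf by auto
  have tb': "tau c b = b" "tau c (1 - b) = b" using tb unfolding b_def by auto
  have P0: "gam K M c (real_of_int K + b) = p0" unfolding gam_def p0_def using tb' by simp
  have P1': "swp (gam M K c (real_of_int M + b)) = p0" unfolding gam_def p0_def swp_def using tb' by simp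
  have Q01a: "rfl M (gam K M c (real_of_int K + b)) = (real_of_int K + b, real_of_int M + 1 - b)"
    unfolding gam_def rfl_def using tb' by simp
  have Q01b: "swp (gam M K c (real_of_int M + 1 - b)) = (real_of_int K + b, real_of_int M + 1 - b)"
    unfolding gam_def swp_def using tb' by (simp add: algebra_simps)
  have Q10a: "swp (rfl K (gam M K c (real_of_int M + b))) = (real_of_int K + 1 - b, real_of_int M + b)"
    unfolding gam_def rfl_def swp_def using tb' by simp
  have Q10b: "gam K M c (real_of_int K + 1 - b) = (real_of_int K + 1 - b, real_of_int M + b)"
    unfolding gam_def using tb' by (simp add: algebra_simps)
  define I where "I = Iter K M (WW P1 P2)"
  define T where "T = 2 * ln (1 / \<delta>)"
  have d1: "\<delta> < 1"
  proof -
    have "2 * 2 * \<delta> \<le> 2 * pi * \<delta>" using d pi_ge_two by (intro mult_right_mono) auto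
    then show ?thesis using \<open>2 * pi * \<delta> < 1\<close> by linarith
  qed
  have lnpos: "0 < ln (1 / \<delta>)" using d d1 by simp
  have T0: "0 \<le> T" unfolding T_def using lnpos by simp
  have Cpos: "0 < 512 * (1 / \<delta>) * ln (1 / \<delta>)" using d lnpos by simp
  have main: "ennreal (\<bar>f x1 - f x2\<bar>^2) \<le> ennreal (512 * (1 / \<delta>) * ln (1 / \<delta>)) * I"
    if x1: "x1 \<in> Q" "H x1 = h" and x2: "x2 \<in> Q" "H x2 = h" for x1 x2
  proof (cases "I = top")
    case True
    have "ennreal (512 * (1 / \<delta>) * ln (1 / \<delta>)) * I = top"
      using Cpos True lnpos d by (simp add: ennreal_mult_top)
    then show ?thesis by simp
  next
    case False
    have "ennreal (2 / (3/2 * \<delta> - \<delta>)) * (4 * I) \<noteq> top" using False by (simp add: ennreal_mult_eq_top_iff)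
    then have Jfin: "J c \<noteq> top" using Jc unfolding I_def by (metis neq_top_trans)
    have fin0: "Ireg K M \<delta> P1 P2 c \<noteq> top"
      and fin1: "Ireg K M \<delta> (\<lambda>p. P1 (rfl M p)) (\<lambda>p. - P2 (rfl M p)) c \<noteq> top"
      and fin2: "Ireg M K \<delta> (\<lambda>p. P2 (swp p)) (\<lambda>p. P1 (swp p)) c \<noteq> top"
      and fin3: "Ireg M K \<delta> (\<lambda>p. P2 (swp (rfl K p))) (\<lambda>p. - P1 (swp (rfl K p))) c \<noteq> top"
      using Jfin unfolding J_def by auto
    define r0 where "r0 = enn2real (Ireg K M \<delta> P1 P2 c)"
    define r1 where "r1 = enn2real (Ireg K M \<delta> (\<lambda>p. P1 (rfl M p)) (\<lambda>p. - P2 (rfl M p)) c)"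
    define r2 where "r2 = enn2real (Ireg M K \<delta> (\<lambda>p. P2 (swp p)) (\<lambda>p. P1 (swp p)) c)"
    define r3 where "r3 = enn2real (Ireg M K \<delta> (\<lambda>p. P2 (swp (rfl K p))) (\<lambda>p. - P1 (swp (rfl K p))) c)"
    define e0 where "e0 = sqrt (T * r0)"
    define e1 where "e1 = sqrt (T * r1)"
    define e2 where "e2 = sqrt (T * r2)"
    define e3 where "e3 = sqrt (T * r3)"
    have rnn: "0 \<le> r0" "0 \<le> r1" "0 \<le> r2" "0 \<le> r3" unfolding r0_def r1_def r2_def r3_def by auto
    have enn: "0 \<le> e0" "0 \<le> e1" "0 \<le> e2" "0 \<le> e3" unfolding e0_def e1_def e2_def e3_def
      using rnn T0 by auto
    have o0: "\<bar>f (gam K M c x) - f (gam K M c x')\<bar> \<le> e0" if "x \<in> SK" "x' \<in> SK" for x x'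
      unfolding e0_def r0_def
      by (rule osc_real[OF arc_osc[OF g0 d cle that[unfolded SK_def]] fin0 T0[unfolded T_def], folded T_def])
    have o1: "\<bar>f (rfl M (gam K M c x)) - f (rfl M (gam K M c x'))\<bar> \<le> e1" if "x \<in> SK" "x' \<in> SK" for x x'
      unfolding e1_def r1_def
      by (rule osc_real[OF arc_osc[OF g1 d cle that[unfolded SK_def]] fin1 T0[unfolded T_def], folded T_def])
    have o2: "\<bar>f (swp (gam M K c y)) - f (swp (gam M K c y'))\<bar> \<le> e2" if "y \<in> SM" "y' \<in> SM" for y y'
      unfolding e2_def r2_def
      by (rule osc_real[OF arc_osc[OF g2 d cle that[unfolded SM_def]] fin2 T0[unfolded T_def], folded T_def])
    have o3: "\<bar>f (swp (rfl K (gam M K c y))) - f (swp (rfl K (gam M K c y')))\<bar> \<le> e3" if "y \<in> SM" "y' \<in> SM" for y y'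
      unfolding e3_def r3_def
      by (rule osc_real[OF arc_osc[OF g3 d cle that[unfolded SM_def]] fin3 T0[unfolded T_def], folded T_def])
    define E where "E = e0 + e1 + e2 + e3"
    have pt: "\<bar>f p - f p0\<bar> \<le> E" if p: "p \<in> Q" "H p = h" for p
    proof -
      define s where "s = fst p - K"
      define t where "t = snd p - M"
      have pe: "p = (real_of_int K + s, real_of_int M + t)" unfolding s_def t_def by simp
      have sr: "0 \<le> s" "s \<le> 1" and tr: "0 \<le> t" "t \<le> 1"
        using p(1) unfolding Q_def s_def t_def by (auto simp: mem_Times_iff)
      have "\<sigma> * (sin (pi * s) * sin (pi * t)) / pi = \<sigma> * c"
        using p(2) H_shift[of K s M t] unfolding pe[symmetric] h_def \<sigma>_def by simp
      then have e: "sin (pi * s) * sin (pi * t) = pi * c" using s1 by (auto simp: field_simps)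
      show ?thesis
      proof (cases "min t (1 - t) \<le> min s (1 - s)")
        case True
        from classify_aux[OF c0 pc sr tr e True]
        have sb: "bb c \<le> s" "s \<le> 1 - bb c" and tc: "t = tau c s \<or> t = 1 - tau c s" by auto
        have xS: "real_of_int K + s \<in> SK" unfolding SK_def using sb by auto
        have gx: "gam K M c (real_of_int K + s) = (real_of_int K + s, real_of_int M + tau c s)"
          unfolding gam_def by simp
        from tc show ?thesis
        proof
          assume "t = tau c s"
          then have "p = gam K M c (real_of_int K + s)" using pe gx by simp
          then have "\<bar>f p - f p0\<bar> \<le> e0" using o0[OF xS bK(1)] P0 by simp
          then show ?thesis unfolding E_def using enn by linarith
        next
          assume "t = 1 - tau c s"
          then have "p = rfl M (gam K M c (real_of_int K + s))" using pe gx unfolding rfl_def by simp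
          then have "\<bar>f p - f (real_of_int K + b, real_of_int M + 1 - b)\<bar> \<le> e1"
            using o1[OF xS bK(1)] Q01a by simp
          moreover have "\<bar>f (real_of_int K + b, real_of_int M + 1 - b) - f p0\<bar> \<le> e2"
            using o2[OF bM(2) bM(1)] Q01b P1' by simp
          ultimately show ?thesis unfolding E_def using enn by linarith
        qed
      next
        case False
        have e': "sin (pi * t) * sin (pi * s) = pi * c" using e by (simp add: mult.commute)
        have le2: "min s (1 - s) \<le> min t (1 - t)" using False by linarith
        from classify_aux[OF c0 pc tr sr e' le2]
        have tb2: "bb c \<le> t" "t \<le> 1 - bb c" and sc: "s = tau c t \<or> s = 1 - tau c t" by auto
        have yS: "real_of_int M + t \<in> SM" unfolding SM_def using tb2 by auto
        have gy: "gam M K c (real_of_int M + t) = (real_of_int M + t, real_of_int K + tau c t)"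
          unfolding gam_def by simp
        from sc show ?thesis
        proof
          assume "s = tau c t"
          then have "p = swp (gam M K c (real_of_int M + t))" using pe gy unfolding swp_def by simp
          then have "\<bar>f p - f p0\<bar> \<le> e2" using o2[OF yS bM(1)] P1' by simp
          then show ?thesis unfolding E_def using enn by linarith
        next
          assume "s = 1 - tau c t"
          then have "p = swp (rfl K (gam M K c (real_of_int M + t)))" using pe gy unfolding swp_def rfl_def by simp
          then have "\<bar>f p - f (real_of_int K + 1 - b, real_of_int M + b)\<bar> \<le> e3"
            using o3[OF yS bM(1)] Q10a by simp
          moreover have "\<bar>f (real_of_int K + 1 - b, real_of_int M + b) - f p0\<bar> \<le> e0"
            using o0[OF bK(2) bK(1)] Q10b P0 by simp
          ultimately show ?thesis unfolding E_def using enn by linarith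
        qed
      qed
    qed
    have "\<bar>f x1 - f x2\<bar> \<le> 2 * E" using pt[OF x1] pt[OF x2] by linarith
    then have "\<bar>f x1 - f x2\<bar>^2 \<le> (2 * E)^2" by (intro power_mono) auto
    also have "\<dots> = 4 * (e0 + e1 + e2 + e3)^2" unfolding E_def by (simp add: power2_eq_square algebra_simps)
    also have "\<dots> \<le> 4 * (4 * (e0^2 + e1^2 + e2^2 + e3^2))" using sq4[of e0 e1 e2 e3] by simp
    also have "e0^2 + e1^2 + e2^2 + e3^2 = T * (r0 + r1 + r2 + r3)"
      unfolding e0_def e1_def e2_def e3_def using rnn T0 by (simp add: algebra_simps)
    finally have sq: "\<bar>f x1 - f x2\<bar>^2 \<le> 16 * T * (r0 + r1 + r2 + r3)" by simp
    have Jr: "J c = ennreal (r0 + r1 + r2 + r3)"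
      unfolding J_def r0_def r1_def r2_def r3_def using fin0 fin1 fin2 fin3
      by (simp add: ennreal_plus[symmetric] ennreal_enn2real_if)
    have "ennreal (\<bar>f x1 - f x2\<bar>^2) \<le> ennreal (16 * T * (r0 + r1 + r2 + r3))"
      using sq by (rule ennreal_leI)
    also have "\<dots> = ennreal (16 * T) * J c" unfolding Jr using T0 rnn by (simp add: ennreal_mult)
    also have "\<dots> \<le> ennreal (16 * T) * (ennreal (2 / (3/2 * \<delta> - \<delta>)) * (4 * I))"
      using Jc unfolding I_def by (intro mult_left_mono) auto
    also have "\<dots> = ennreal (16 * T * (2 / (3/2 * \<delta> - \<delta>)) * 4) * I"
    proof -
      define a where "a = 2 / (3/2 * \<delta> - \<delta>)"
      have a0: "0 \<le> a" unfolding a_def using d by simp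
      have "ennreal (16 * T * a * 4) = ennreal (16 * T * a) * ennreal 4"
        using T0 a0 by (intro ennreal_mult) auto
      also have "ennreal (16 * T * a) = ennreal (16 * T) * ennreal a"
        using T0 a0 by (intro ennreal_mult) auto
      finally have "ennreal (16 * T * a * 4) = ennreal (16 * T) * ennreal a * 4" by simp
      then show ?thesis unfolding a_def[symmetric] by (simp add: mult.assoc)
    qed
    also have "16 * T * (2 / (3/2 * \<delta> - \<delta>)) * 4 = 512 * (1 / \<delta>) * ln (1 / \<delta>)"
      unfolding T_def using d by (simp add: field_simps)
    finally show ?thesis .
  qed
  show ?thesis
    unfolding Q_def[symmetric] I_def[symmetric]
  proof (intro exI[of _ h] conjI ballI)
    show "h \<noteq> 0" using habs c0 by auto
    show "\<delta> < \<bar>h\<bar>" using habs c by simp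
    show "\<bar>h\<bar> < 2 * \<delta>" using habs c d by simp
    show "{x \<in> Q. H x = h} \<noteq> {}" using p0Q Hp0 by blast
  next
    fix x1 x2 assume "x1 \<in> {x \<in> Q. H x = h}" "x2 \<in> {x \<in> Q. H x = h}"
    then show "ennreal (\<bar>f x1 - f x2\<bar>^2) \<le> ennreal (512 * (1 / \<delta>) * ln (1 / \<delta>)) * I"
      using main by auto
  qed
qed


lemma Iter_le:
  assumes g: "good k m f P1 P2" and sub: "icell k m \<subseteq> Q"
  shows "Iter k m (WW P1 P2) \<le> (\<integral>\<^sup>+x\<in>Q. ennreal ((WW P1 P2 x)\<^sup>2) \<partial>lborel)"
proof -
  define G where "G p = indicator (icell k m) p * (WW P1 P2 p)\<^sup>2" for p
  have [measurable]: "G \<in> borel_measurable borel" unfolding G_def[abs_def] by (rule WW_meas[OF g])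
  have M: "(\<lambda>p. ennreal (G p)) \<in> borel_measurable (lborel \<Otimes>\<^sub>M lborel)" by (simp add: lborel_prod)
  have "Iter k m (WW P1 P2) = (\<integral>\<^sup>+x. \<integral>\<^sup>+y. ennreal (G (x, y)) \<partial>lborel \<partial>lborel)"
    unfolding Iter_def G_def ..
  also have "\<dots> = integral\<^sup>N (lborel \<Otimes>\<^sub>M lborel) (\<lambda>p. ennreal (G p))"
    by (rule lborel.nn_integral_fst[OF M])
  also have "\<dots> = (\<integral>\<^sup>+p. ennreal (G p) \<partial>lborel)" by (simp add: lborel_prod)
  also have "\<dots> \<le> (\<integral>\<^sup>+x\<in>Q. ennreal ((WW P1 P2 x)\<^sup>2) \<partial>lborel)"
    unfolding G_def using sub by (intro nn_integral_mono) (auto simp: indicator_def)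
  finally show ?thesis .
qed

lemma main_inst:
  fixes L :: int and A lam \<delta> :: real and \<phi> :: "real \<times> real \<Rightarrow> real" and Q :: "(real \<times> real) set"
  assumes pe: "principal_eigenfunction (real_of_int L) A lam \<phi>" and cell: "is_cell (real_of_int L) Q"
    and d: "0 < \<delta>" "\<delta> < 1 / (2 * pi)"
  shows "\<exists>h. h \<noteq> 0 \<and> \<delta> < \<bar>h\<bar> \<and> \<bar>h\<bar> < 2 * \<delta> \<and> {x \<in> Q. H x = h} \<noteq> {} \<and>
           (\<forall>x1\<in>{x \<in> Q. H x = h}. \<forall>x2\<in>{x \<in> Q. H x = h}.
              ennreal (\<bar>\<phi> x1 - \<phi> x2\<bar>^2)
                \<le> ennreal (512 * (1 / \<delta>) * ln (1 / \<delta>))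
                   * (\<integral>\<^sup>+ x\<in>Q. ennreal ((v x \<bullet> grad \<phi> x)^2) \<partial>lborel))"
proof -
  obtain K M :: int where Q: "Q = {real_of_int K..real_of_int K + 1} \<times> {real_of_int M..real_of_int M + 1}"
    and QD: "Q \<subseteq> D (real_of_int L)"
    using cell unfolding is_cell_def by blast
  have C1: "C1_on (interior (D (real_of_int L))) \<phi>" using pe unfolding principal_eigenfunction_def C2_on_def by blast
  have sub: "icell K M \<subseteq> Q" unfolding Q icell_def by auto
  have isub: "icell K M \<subseteq> interior (D (real_of_int L))"
    using sub QD open_icell by (intro interior_maximal) auto
  have g: "good K M \<phi> (d1 \<phi>) (d2 \<phi>)"
    unfolding good_def
  proof (intro conjI ballI)
    fix x assume "x \<in> icell K M"
    then have "\<phi> differentiable (at x)" using C1 isub unfolding C1_on_def by blast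
    then show "(\<phi> has_derivative (\<lambda>h. d1 \<phi> x * fst h + d2 \<phi> x * snd h)) (at x)"
      by (rule partials_has_derivative)
  next
    show "continuous_on (icell K M) (d1 \<phi>)" "continuous_on (icell K M) (d2 \<phi>)"
      using C1 isub unfolding C1_on_def by (auto intro: continuous_on_subset)
  qed
  from core[OF g d] obtain h where h: "h \<noteq> 0" "\<delta> < \<bar>h\<bar>" "\<bar>h\<bar> < 2 * \<delta>"
    "{x \<in> Q. H x = h} \<noteq> {}"
    and bnd: "\<And>x1 x2. x1 \<in> {x \<in> Q. H x = h} \<Longrightarrow> x2 \<in> {x \<in> Q. H x = h} \<Longrightarrow>
        ennreal (\<bar>\<phi> x1 - \<phi> x2\<bar>^2) \<le> ennreal (512 * (1 / \<delta>) * ln (1 / \<delta>)) * Iter K M (WW (d1 \<phi>) (d2 \<phi>))"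
    unfolding Q by blast
  have Ib: "Iter K M (WW (d1 \<phi>) (d2 \<phi>)) \<le> (\<integral>\<^sup>+ x\<in>Q. ennreal ((v x \<bullet> grad \<phi> x)^2) \<partial>lborel)"
    using Iter_le[OF g sub] by (simp add: v_grad)
  have fin: "\<forall>x1\<in>{x \<in> Q. H x = h}. \<forall>x2\<in>{x \<in> Q. H x = h}.
              ennreal (\<bar>\<phi> x1 - \<phi> x2\<bar>^2)
                \<le> ennreal (512 * (1 / \<delta>) * ln (1 / \<delta>))
                   * (\<integral>\<^sup>+ x\<in>Q. ennreal ((v x \<bullet> grad \<phi> x)^2) \<partial>lborel)"
  proof (intro ballI)
    fix x1 x2 assume "x1 \<in> {x \<in> Q. H x = h}" "x2 \<in> {x \<in> Q. H x = h}"
    from bnd[OF this] Ib show "ennreal (\<bar>\<phi> x1 - \<phi> x2\<bar>^2)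
                \<le> ennreal (512 * (1 / \<delta>) * ln (1 / \<delta>))
                   * (\<integral>\<^sup>+ x\<in>Q. ennreal ((v x \<bullet> grad \<phi> x)^2) \<partial>lborel)"
      by (meson mult_left_mono order_trans zero_le)
  qed
  show "\<exists>h. h \<noteq> 0 \<and> \<delta> < \<bar>h\<bar> \<and> \<bar>h\<bar> < 2 * \<delta> \<and> {x \<in> Q. H x = h} \<noteq> {} \<and>
           (\<forall>x1\<in>{x \<in> Q. H x = h}. \<forall>x2\<in>{x \<in> Q. H x = h}.
              ennreal (\<bar>\<phi> x1 - \<phi> x2\<bar>^2)
                \<le> ennreal (512 * (1 / \<delta>) * ln (1 / \<delta>))
                   * (\<integral>\<^sup>+ x\<in>Q. ennreal ((v x \<bullet> grad \<phi> x)^2) \<partial>lborel))"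
    using h fin by blast
qed

theorem lemma2p2:
  "\<exists>C::real. C > 0 \<and>
     (\<forall>(L::int) (A::real) (lam::real) (\<phi>::real \<times> real \<Rightarrow> real) Q (\<delta>\<^sub>0::real).
        L \<ge> 2 \<longrightarrow> even L \<longrightarrow> A > 0 \<longrightarrow>
        principal_eigenfunction (real_of_int L) A lam \<phi> \<longrightarrow>
        is_cell (real_of_int L) Q \<longrightarrow>
        0 < \<delta>\<^sub>0 \<longrightarrow> \<delta>\<^sub>0 < 1 / (2 * pi) \<longrightarrow>
        (\<exists>h::real. h \<noteq> 0 \<and> \<delta>\<^sub>0 < \<bar>h\<bar> \<and> \<bar>h\<bar> < 2 * \<delta>\<^sub>0 \<and>
           {x \<in> Q. H x = h} \<noteq> {} \<and>
           (\<forall>x1\<in>{x \<in> Q. H x = h}. \<forall>x2\<in>{x \<in> Q. H x = h}.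
              ennreal (\<bar>\<phi> x1 - \<phi> x2\<bar>^2)
                \<le> ennreal (C * (1 / \<delta>\<^sub>0) * ln (1 / \<delta>\<^sub>0))
                   * (\<integral>\<^sup>+ x\<in>Q. ennreal ((v x \<bullet> grad \<phi> x)^2) \<partial>lborel))))"
  using main_inst by (intro exI[of _ 512]) auto

end
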